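(* Let $\Sigma$ be a $\sigma$-finite measure space and let $\varphi\in L^\infty(\Sigma^2)$ be a Schur multiplier on $B(L^2(\Sigma))$. Suppose $H$ is a Hilbert space and $\alpha,\beta\in L^\infty(\Sigma,H)$ satisfy $\varphi(s,t)=\langle\alpha(s),\beta(t)\rangle_H$ for almost every $(s,t)\in\Sigma\times\Sigma$. Then $M^\infty_\varphi$ is unital (i.e. $M_\varphi^\infty(I)=I$) if and only if $\langle\alpha(t),\beta(t)\rangle_H=1$ for almost every $t\in\Sigma$.
   Context: $L^\infty(\Sigma,H)$ is the Bochner space of (strongly) measurable essentially bounded $H$-valued functions. $S_f(h)=\int_\Sigma f(\cdot,t)h(t)dt$ for $f\in L^2(\Sigma^2)$; $M_\varphi(S_f)=S_{\varphi f}$ on $S^2(L^2(\Sigma))$. $\varphi$ is a Schur multiplier on $B(L^2(\Sigma))$ if $\|M_\varphi(S)\|_{B(L^2)}\le C\|S\|_{B(L^2)}$ for all $S\in S^2(L^2(\Sigma))$; $M_\varphi^\infty$ denotes its unique $w^*$-continuous extension to $B(L^2(\Sigma))$. *)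

theory Defs
  imports "HOL-Analysis.Analysis"
begin

text \<open>HOL-Analysis only provides real inner product spaces.\<close>

class chilbert = banach +
  fixes scaleC :: "complex \<Rightarrow> 'a \<Rightarrow> 'a"
    and cinner :: "'a \<Rightarrow> 'a \<Rightarrow> complex"
  assumes scaleC_add_right: "scaleC c (x + y) = scaleC c x + scaleC c y"
    and scaleC_add_left: "scaleC (c + d) x = scaleC c x + scaleC d x"
    and scaleC_scaleC: "scaleC c (scaleC d x) = scaleC (c * d) x"
    and scaleC_one: "scaleC 1 x = x"
    and scaleR_scaleC: "scaleR r x = scaleC (complex_of_real r) x"
    and cinner_add_left: "cinner (x + y) z = cinner x z + cinner y z"
    and cinner_scaleC_left: "cinner (scaleC c x) y = c * cinner x y"
    and cinner_commute: "cinner x y = cnj (cinner y x)"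
    and norm_cinner: "norm x = sqrt (Re (cinner x x))"

definition strongly_measurable :: "'a measure \<Rightarrow> ('a \<Rightarrow> 'b::metric_space) \<Rightarrow> bool" where
  "strongly_measurable M f \<longleftrightarrow>
     (\<exists>s :: nat \<Rightarrow> 'a \<Rightarrow> 'b. (\<forall>n. simple_function M (s n)) \<and>
        (AE x in M. (\<lambda>n. s n x) \<longlonglongrightarrow> f x))"

definition Linf_vec :: "'a measure \<Rightarrow> ('a \<Rightarrow> 'b::real_normed_vector) \<Rightarrow> bool" where
  "Linf_vec M f \<longleftrightarrow> strongly_measurable M f \<and> (\<exists>C. AE x in M. norm (f x) \<le> C)"

definition Linf2 :: "'a measure \<Rightarrow> ('a \<Rightarrow> 'a \<Rightarrow> complex) \<Rightarrow> bool" where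
  "Linf2 M \<phi> \<longleftrightarrow> (\<lambda>z. \<phi> (fst z) (snd z)) \<in> borel_measurable (M \<Otimes>\<^sub>M M) \<and>
     (\<exists>C. AE z in M \<Otimes>\<^sub>M M. cmod (\<phi> (fst z) (snd z)) \<le> C)"

text \<open>Elements of L^2 are represented by square-integrable functions; operators by
maps on functions, considered up to a.e. equality of their values on L^2.\<close>

definition L2 :: "'a measure \<Rightarrow> ('a \<Rightarrow> complex) set" where
  "L2 M = {f. f \<in> borel_measurable M \<and> integrable M (\<lambda>x. (cmod (f x))\<^sup>2)}"

definition l2inner :: "'a measure \<Rightarrow> ('a \<Rightarrow> complex) \<Rightarrow> ('a \<Rightarrow> complex) \<Rightarrow> complex" where
  "l2inner M f g = (LINT x|M. f x * cnj (g x))"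

definition l2norm :: "'a measure \<Rightarrow> ('a \<Rightarrow> complex) \<Rightarrow> real" where
  "l2norm M f = sqrt (LINT x|M. (cmod (f x))\<^sup>2)"

type_synonym 'a op = "('a \<Rightarrow> complex) \<Rightarrow> ('a \<Rightarrow> complex)"

definition op_eq :: "'a measure \<Rightarrow> 'a op \<Rightarrow> 'a op \<Rightarrow> bool" where
  "op_eq M T S \<longleftrightarrow> (\<forall>h\<in>L2 M. AE x in M. T h x = S h x)"

definition op_bound :: "'a measure \<Rightarrow> 'a op \<Rightarrow> real \<Rightarrow> bool" where
  "op_bound M T C \<longleftrightarrow> (\<forall>h\<in>L2 M. l2norm M (T h) \<le> C * l2norm M h)"

definition bounded_op :: "'a measure \<Rightarrow> 'a op \<Rightarrow> bool" where
  "bounded_op M T \<longleftrightarrow> (\<forall>h\<in>L2 M. T h \<in> L2 M) \<and>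
     (\<forall>f\<in>L2 M. \<forall>g\<in>L2 M. \<forall>c. AE x in M. T (\<lambda>y. f y + c * g y) x = T f x + c * T g x) \<and>
     (\<exists>C. op_bound M T C)"

definition L2_kernel :: "'a measure \<Rightarrow> ('a \<Rightarrow> 'a \<Rightarrow> complex) \<Rightarrow> bool" where
  "L2_kernel M k \<longleftrightarrow> (\<lambda>z. k (fst z) (snd z)) \<in> borel_measurable (M \<Otimes>\<^sub>M M) \<and>
     integrable (M \<Otimes>\<^sub>M M) (\<lambda>z. (cmod (k (fst z) (snd z)))\<^sup>2)"

definition hs_op :: "'a measure \<Rightarrow> ('a \<Rightarrow> 'a \<Rightarrow> complex) \<Rightarrow> 'a op" where
  "hs_op M k = (\<lambda>h s. LINT t|M. k s t * h t)"

definition schur_multiplier :: "'a measure \<Rightarrow> ('a \<Rightarrow> 'a \<Rightarrow> complex) \<Rightarrow> bool" where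
  "schur_multiplier M \<phi> \<longleftrightarrow> (\<exists>C. \<forall>k. L2_kernel M k \<longrightarrow>
     (\<forall>D. op_bound M (hs_op M k) D \<longrightarrow> op_bound M (hs_op M (\<lambda>s t. \<phi> s t * k s t)) (C * D)))"

text \<open>Normal (w*-continuous) functionals on B(L^2) are exactly
T \<mapsto> \<Sum>n <T x_n, y_n> with \<Sum>n ||x_n|| ||y_n|| < \<infinity>.\<close>
definition normal_seq :: "'a measure \<Rightarrow> (nat \<Rightarrow> 'a \<Rightarrow> complex) \<Rightarrow> (nat \<Rightarrow> 'a \<Rightarrow> complex) \<Rightarrow> bool" where
  "normal_seq M x y \<longleftrightarrow> (\<forall>n. x n \<in> L2 M \<and> y n \<in> L2 M) \<and>
     summable (\<lambda>n. l2norm M (x n) * l2norm M (y n))"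

definition normal_fun :: "'a measure \<Rightarrow> (nat \<Rightarrow> 'a \<Rightarrow> complex) \<Rightarrow> (nat \<Rightarrow> 'a \<Rightarrow> complex) \<Rightarrow> 'a op \<Rightarrow> complex" where
  "normal_fun M x y T = (\<Sum>n. l2inner M (T (x n)) (y n))"

text \<open>A map W on B(L^2) is w*-continuous iff the composition of every normal functional
with W is again a normal functional (the w*-topology is the weak topology induced by
the normal functionals).\<close>
definition wstar_continuous :: "'a measure \<Rightarrow> ('a op \<Rightarrow> 'a op) \<Rightarrow> bool" where
  "wstar_continuous M W \<longleftrightarrow> (\<forall>x y. normal_seq M x y \<longrightarrow>
     (\<exists>x' y'. normal_seq M x' y' \<and>
        (\<forall>T. bounded_op M T \<longrightarrow> normal_fun M x y (W T) = normal_fun M x' y' T)))"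

text \<open>W is (a representative of) M_phi^infinity: a w*-continuous linear map on B(L^2)
extending S_k \<mapsto> S_{phi k} on the Hilbert-Schmidt class.\<close>
definition schur_ext :: "'a measure \<Rightarrow> ('a \<Rightarrow> 'a \<Rightarrow> complex) \<Rightarrow> ('a op \<Rightarrow> 'a op) \<Rightarrow> bool" where
  "schur_ext M \<phi> W \<longleftrightarrow>
     (\<forall>T. bounded_op M T \<longrightarrow> bounded_op M (W T)) \<and>
     (\<forall>T S. bounded_op M T \<longrightarrow> bounded_op M S \<longrightarrow> op_eq M T S \<longrightarrow> op_eq M (W T) (W S)) \<and>
     (\<forall>T S c. bounded_op M T \<longrightarrow> bounded_op M S \<longrightarrow>
        op_eq M (W (\<lambda>h x. T h x + c * S h x)) (\<lambda>h x. W T h x + c * W S h x)) \<and>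
     (\<forall>k. L2_kernel M k \<longrightarrow> op_eq M (W (hs_op M k)) (hs_op M (\<lambda>s t. \<phi> s t * k s t))) \<and>
     wstar_continuous M W"

end

theory Submission
  imports Defs
begin


lemma L2_meas: "f \<in> L2 M \<Longrightarrow> f \<in> borel_measurable M" by (simp add: L2_def)
lemma L2_int: "f \<in> L2 M \<Longrightarrow> integrable M (\<lambda>x. (cmod (f x))\<^sup>2)" by (simp add: L2_def)

lemma borel_measurable_cnj'[measurable]:
  "f \<in> borel_measurable M \<Longrightarrow> (\<lambda>x. cnj (f x :: complex)) \<in> borel_measurable M"
  by (intro borel_measurable_continuous_on[where f=cnj] continuous_intros)

lemma L2_cnj: "f \<in> L2 M \<Longrightarrow> (\<lambda>x. cnj (f x)) \<in> L2 M"
  unfolding L2_def by auto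
lemma L2_norm: "f \<in> L2 M \<Longrightarrow> (\<lambda>x. complex_of_real (cmod (f x))) \<in> L2 M"
  unfolding L2_def by auto

lemma L2_prod_int:
  assumes "f \<in> L2 M" "g \<in> L2 M"
  shows "integrable M (\<lambda>x. f x * g x)"
proof (rule Bochner_Integration.integrable_bound[where f="\<lambda>x. (cmod (f x))\<^sup>2 + (cmod (g x))\<^sup>2"])
  show "integrable M (\<lambda>x. (cmod (f x))\<^sup>2 + (cmod (g x))\<^sup>2)" using assms by (auto simp: L2_def)
  show "(\<lambda>x. f x * g x) \<in> borel_measurable M" using assms by (auto simp: L2_def)
  show "AE x in M. norm (f x * g x) \<le> norm ((cmod (f x))\<^sup>2 + (cmod (g x))\<^sup>2)"
  proof (intro AE_I2)
    fix x
    have "cmod (f x) * cmod (g x) \<le> (cmod (f x))\<^sup>2 + (cmod (g x))\<^sup>2"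
      using sum_squares_bound[of "cmod (f x)" "cmod (g x)"] mult_nonneg_nonneg[OF norm_ge_zero norm_ge_zero, of "f x" "g x"]
      by linarith
    then show "norm (f x * g x) \<le> norm ((cmod (f x))\<^sup>2 + (cmod (g x))\<^sup>2)"
      by (simp add: norm_mult)
  qed
qed

lemma L2_prod_int_cnj:
  assumes "f \<in> L2 M" "g \<in> L2 M"
  shows "integrable M (\<lambda>x. f x * cnj (g x))"
proof -
  have "(\<lambda>x. cnj (g x)) \<in> L2 M" using L2_cnj[OF assms(2)] .
  then show ?thesis using L2_prod_int assms(1) by blast
qed

lemma L2_prod_norm_int:
  assumes "f \<in> L2 M" "g \<in> L2 M"
  shows "integrable M (\<lambda>x. cmod (f x) * cmod (g x))"
  using integrable_norm[OF L2_prod_int[OF assms]] by (simp add: norm_mult)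

lemma L2_add: assumes "f \<in> L2 M" "g \<in> L2 M" shows "(\<lambda>x. f x + g x) \<in> L2 M"
proof -
  have "integrable M (\<lambda>x. (cmod (f x + g x))\<^sup>2)"
  proof (rule Bochner_Integration.integrable_bound[where f="\<lambda>x. 2*(cmod (f x))\<^sup>2 + 2*(cmod (g x))\<^sup>2"])
    show "integrable M (\<lambda>x. 2*(cmod (f x))\<^sup>2 + 2*(cmod (g x))\<^sup>2)" using assms by (auto simp: L2_def)
    show "(\<lambda>x. (cmod (f x + g x))\<^sup>2) \<in> borel_measurable M" using assms by (auto simp: L2_def)
    show "AE x in M. norm ((cmod (f x + g x))\<^sup>2) \<le> norm (2*(cmod (f x))\<^sup>2 + 2*(cmod (g x))\<^sup>2)"
    proof (intro AE_I2)
      fix x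
      have t: "cmod (f x + g x) \<le> cmod (f x) + cmod (g x)" by (rule norm_triangle_ineq)
      have "(cmod (f x + g x))\<^sup>2 \<le> (cmod (f x) + cmod (g x))\<^sup>2"
        using t by (simp add: power_mono)
      also have "\<dots> \<le> 2*(cmod (f x))\<^sup>2 + 2*(cmod (g x))\<^sup>2"
        using sum_squares_bound[of "cmod (f x)" "cmod (g x)"] power2_sum[of "cmod (f x)" "cmod (g x)"]
        by linarith
      finally show "norm ((cmod (f x + g x))\<^sup>2) \<le> norm (2*(cmod (f x))\<^sup>2 + 2*(cmod (g x))\<^sup>2)"
        by simp
    qed
  qed
  then show ?thesis using assms by (auto simp: L2_def)
qed

lemma L2_bmult:
  assumes "f \<in> L2 M" "g \<in> borel_measurable M" "\<And>x. x \<in> space M \<Longrightarrow> cmod (g x) \<le> B"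
  shows "(\<lambda>x. g x * f x) \<in> L2 M"
proof -
  have B: "0 \<le> B" if "space M \<noteq> {}" using assms(3) that norm_ge_zero order_trans by blast
  have "integrable M (\<lambda>x. (cmod (g x * f x))\<^sup>2)"
  proof (rule Bochner_Integration.integrable_bound[where f="\<lambda>x. B\<^sup>2 * (cmod (f x))\<^sup>2"])
    show "integrable M (\<lambda>x. B\<^sup>2 * (cmod (f x))\<^sup>2)" using assms by (auto simp: L2_def)
    show "(\<lambda>x. (cmod (g x * f x))\<^sup>2) \<in> borel_measurable M" using assms by (auto simp: L2_def)
    show "AE x in M. norm ((cmod (g x * f x))\<^sup>2) \<le> norm (B\<^sup>2 * (cmod (f x))\<^sup>2)"
    proof (rule AE_I2)
      fix x assume x: "x \<in> space M"
      have "cmod (g x) * cmod (f x) \<le> B * cmod (f x)" using assms(3)[OF x] by (simp add: mult_right_mono)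
      then have "(cmod (g x) * cmod (f x))\<^sup>2 \<le> (B * cmod (f x))\<^sup>2" by (simp add: power_mono)
      then show "norm ((cmod (g x * f x))\<^sup>2) \<le> norm (B\<^sup>2 * (cmod (f x))\<^sup>2)"
        by (simp add: norm_mult power_mult_distrib)
    qed
  qed
  then show ?thesis using assms by (auto simp: L2_def)
qed

lemma L2_cmult: "f \<in> L2 M \<Longrightarrow> (\<lambda>x. c * f x) \<in> L2 M"
  using L2_bmult[of f M "\<lambda>_. c" "cmod c"] by auto

lemma L2_zero: "(\<lambda>x. 0) \<in> L2 M" by (simp add: L2_def)

lemma L2_diff: "f \<in> L2 M \<Longrightarrow> g \<in> L2 M \<Longrightarrow> (\<lambda>x. f x - g x) \<in> L2 M"
  using L2_add[of f M "\<lambda>x. (-1) * g x"] L2_cmult[of g M "-1"] by simp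


lemma L2_indicator:
  assumes "A \<in> sets M" "emeasure M A < \<infinity>"
  shows "(\<lambda>x. indicator A x :: complex) \<in> L2 M"
proof -
  have "(\<lambda>x. (cmod (indicator A x :: complex))\<^sup>2) = indicator A"
    by (auto simp: indicator_def)
  then show ?thesis using assms by (auto simp: L2_def)
qed

lemma L2_sum: "finite I \<Longrightarrow> (\<And>i. i \<in> I \<Longrightarrow> f i \<in> L2 M) \<Longrightarrow> (\<lambda>x. \<Sum>i\<in>I. f i x) \<in> L2 M"
  by (induction I rule: finite_induct) (auto intro: L2_add L2_zero)

lemma l2norm_nonneg: "0 \<le> l2norm M f" by (simp add: l2norm_def)

lemma l2norm_sq: "f \<in> L2 M \<Longrightarrow> (l2norm M f)\<^sup>2 = (LINT x|M. (cmod (f x))\<^sup>2)"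
  by (simp add: l2norm_def)

lemma l2inner_add_left:
  assumes "f \<in> L2 M" "g \<in> L2 M" "h \<in> L2 M"
  shows "l2inner M (\<lambda>x. f x + g x) h = l2inner M f h + l2inner M g h"
  unfolding l2inner_def using L2_prod_int_cnj[OF assms(1,3)] L2_prod_int_cnj[OF assms(2,3)]
  by (simp add: distrib_right)

lemma l2inner_cmult_left:
  shows "l2inner M (\<lambda>x. c * f x) h = c * l2inner M f h"
  unfolding l2inner_def by (simp add: mult.assoc)

lemma l2inner_diff_left:
  assumes "f \<in> L2 M" "g \<in> L2 M" "h \<in> L2 M"
  shows "l2inner M (\<lambda>x. f x - g x) h = l2inner M f h - l2inner M g h"
  unfolding l2inner_def using L2_prod_int_cnj[OF assms(1,3)] L2_prod_int_cnj[OF assms(2,3)]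
  by (simp add: left_diff_distrib)

lemma l2inner_zero_right: "l2inner M f (\<lambda>x. 0) = 0"
  by (simp add: l2inner_def)

lemma l2inner_self: "f \<in> L2 M \<Longrightarrow> l2inner M f f = complex_of_real ((l2norm M f)\<^sup>2)"
  unfolding l2inner_def l2norm_sq
  by (simp add: complex_norm_square[symmetric] del: of_real_power)

lemma cs_real_aux:
  fixes a b :: real assumes "t > 0"
  shows "2 * (a * b) \<le> t * a\<^sup>2 + b\<^sup>2 / t"
proof -
  have "0 \<le> (t * a - b)\<^sup>2 / t" using assms by simp
  also have "(t * a - b)\<^sup>2 / t = t * a\<^sup>2 + b\<^sup>2 / t - 2 * (a * b)"
    using assms by (simp add: power2_diff field_simps power2_eq_square)
  finally show ?thesis by simp
qed

lemma L2_cs_real: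
  assumes f: "f \<in> L2 M" and g: "g \<in> L2 M"
  shows "(LINT x|M. cmod (f x) * cmod (g x)) \<le> l2norm M f * l2norm M g"
proof -
  define a where "a = (LINT x|M. (cmod (f x))\<^sup>2)"
  define b where "b = (LINT x|M. (cmod (g x))\<^sup>2)"
  define c where "c = (LINT x|M. cmod (f x) * cmod (g x))"
  have a0: "0 \<le> a" unfolding a_def by simp
  have b0: "0 \<le> b" unfolding b_def by simp
  have fi: "integrable M (\<lambda>x. (cmod (f x))\<^sup>2)" "integrable M (\<lambda>x. (cmod (g x))\<^sup>2)"
    using f g by (auto simp: L2_def)
  have ci: "integrable M (\<lambda>x. cmod (f x) * cmod (g x))" by (rule L2_prod_norm_int[OF f g])
  have key: "2 * c \<le> t * a + b / t" if t: "t > 0" for t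
  proof -
    have "2 * c = (LINT x|M. 2 * (cmod (f x) * cmod (g x)))" unfolding c_def by simp
    also have "\<dots> \<le> (LINT x|M. t * (cmod (f x))\<^sup>2 + (cmod (g x))\<^sup>2 / t)"
      using ci fi by (intro integral_mono cs_real_aux t) auto
    also have "\<dots> = t * a + b / t" unfolding a_def b_def using fi by simp
    finally show ?thesis .
  qed
  have c0: "0 \<le> c" unfolding c_def by simp
  have "c \<le> sqrt a * sqrt b"
  proof (cases "a = 0 \<or> b = 0")
    case True
    then have "AE x in M. cmod (f x) * cmod (g x) = 0"
    proof
      assume "a = 0"
      then have "AE x in M. (cmod (f x))\<^sup>2 = 0" using fi unfolding a_def
        by (subst integral_nonneg_eq_0_iff_AE[symmetric]) auto
      then show ?thesis by auto
    next
      assume "b = 0"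
      then have "AE x in M. (cmod (g x))\<^sup>2 = 0" using fi unfolding b_def
        by (subst integral_nonneg_eq_0_iff_AE[symmetric]) auto
      then show ?thesis by auto
    qed
    then have "c = 0" unfolding c_def by (simp add: integral_eq_zero_AE)
    then show ?thesis using a0 b0 by simp
  next
    case False
    then have ap: "a > 0" and bp: "b > 0" using a0 b0 by auto
    define t where "t = sqrt b / sqrt a"
    have tp: "t > 0" unfolding t_def using ap bp by simp
    have sa: "sqrt a * sqrt a = a" "sqrt b * sqrt b = b" using a0 b0 by auto
    have sa0: "sqrt a \<noteq> 0" "sqrt b \<noteq> 0" using ap bp by auto
    have "t * a = sqrt b / sqrt a * (sqrt a * sqrt a)" unfolding t_def sa ..
    also have "\<dots> = sqrt a * sqrt b" using sa0 by (simp add: field_simps)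
    finally have e1: "t * a = sqrt a * sqrt b" .
    have "b / t = (sqrt b * sqrt b) / (sqrt b / sqrt a)" unfolding t_def sa ..
    also have "\<dots> = sqrt a * sqrt b" using sa0 by (simp add: field_simps)
    finally have e2: "b / t = sqrt a * sqrt b" .
    note key[OF tp]
    then have "2 * c \<le> 2 * (sqrt a * sqrt b)" unfolding e1 e2 by simp
    then show ?thesis by simp
  qed
  then show ?thesis unfolding l2norm_def a_def b_def c_def .
qed

lemma L2_cs:
  assumes f: "f \<in> L2 M" and g: "g \<in> L2 M"
  shows "cmod (l2inner M f g) \<le> l2norm M f * l2norm M g"
proof -
  have "cmod (l2inner M f g) \<le> (LINT x|M. norm (f x * cnj (g x)))"
    unfolding l2inner_def by (rule integral_norm_bound)
  also have "\<dots> = (LINT x|M. cmod (f x) * cmod (g x))" by (simp add: norm_mult)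
  also have "\<dots> \<le> l2norm M f * l2norm M g" by (rule L2_cs_real[OF f g])
  finally show ?thesis .
qed

lemma l2norm_triangle:
  assumes f: "f \<in> L2 M" and g: "g \<in> L2 M"
  shows "l2norm M (\<lambda>x. f x + g x) \<le> l2norm M f + l2norm M g"
proof -
  have fi: "integrable M (\<lambda>x. (cmod (f x))\<^sup>2)" "integrable M (\<lambda>x. (cmod (g x))\<^sup>2)"
    using f g by (auto simp: L2_def)
  have ci: "integrable M (\<lambda>x. cmod (f x) * cmod (g x))" by (rule L2_prod_norm_int[OF f g])
  have fgi: "integrable M (\<lambda>x. (cmod (f x + g x))\<^sup>2)" using L2_add[OF f g] by (simp add: L2_def)
  have "(LINT x|M. (cmod (f x + g x))\<^sup>2) \<le> (LINT x|M. (cmod (f x))\<^sup>2 + (cmod (g x))\<^sup>2 + 2 * (cmod (f x) * cmod (g x)))"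
  proof (intro integral_mono fgi)
    show "integrable M (\<lambda>x. (cmod (f x))\<^sup>2 + (cmod (g x))\<^sup>2 + 2 * (cmod (f x) * cmod (g x)))"
      using fi ci by auto
    fix x
    have "(cmod (f x + g x))\<^sup>2 \<le> (cmod (f x) + cmod (g x))\<^sup>2"
      by (simp add: norm_triangle_ineq power_mono)
    then show "(cmod (f x + g x))\<^sup>2 \<le> (cmod (f x))\<^sup>2 + (cmod (g x))\<^sup>2 + 2 * (cmod (f x) * cmod (g x))"
      by (simp add: power2_sum)
  qed
  also have "\<dots> = (l2norm M f)\<^sup>2 + (l2norm M g)\<^sup>2 + 2 * (LINT x|M. cmod (f x) * cmod (g x))"
    using fi ci by (simp add: l2norm_sq[OF f] l2norm_sq[OF g])
  also have "\<dots> \<le> (l2norm M f)\<^sup>2 + (l2norm M g)\<^sup>2 + 2 * (l2norm M f * l2norm M g)"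
    using L2_cs_real[OF f g] by simp
  also have "\<dots> = (l2norm M f + l2norm M g)\<^sup>2" by (simp add: power2_sum)
  finally have "(l2norm M (\<lambda>x. f x + g x))\<^sup>2 \<le> (l2norm M f + l2norm M g)\<^sup>2"
    using l2norm_sq[OF L2_add[OF f g]] by simp
  then show ?thesis
    by (rule power2_le_imp_le) (simp add: l2norm_nonneg)
qed

lemma l2norm_cong_AE:
  assumes "f \<in> borel_measurable M" "g \<in> borel_measurable M" "AE x in M. f x = g x"
  shows "l2norm M f = l2norm M g"
  unfolding l2norm_def using assms by (intro arg_cong[where f=sqrt] integral_cong_AE) auto

lemma l2inner_cong_AE:
  assumes "f \<in> borel_measurable M" "f' \<in> borel_measurable M" "AE x in M. f x = f' x"
    "g \<in> borel_measurable M"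
  shows "l2inner M f g = l2inner M f' g"
  unfolding l2inner_def using assms by (intro integral_cong_AE) auto

lemma l2norm_cmult: "l2norm M (\<lambda>x. c * f x) = cmod c * l2norm M f"
  unfolding l2norm_def by (simp add: norm_mult power_mult_distrib real_sqrt_mult)

lemma l2norm_minus_commute: "l2norm M (\<lambda>x. f x - g x) = l2norm M (\<lambda>x. g x - f x)"
  unfolding l2norm_def by (simp add: norm_minus_commute)

lemma l2norm_eq_0:
  assumes "f \<in> L2 M" "l2norm M f = 0" shows "AE x in M. f x = 0"
proof -
  have "(LINT x|M. (cmod (f x))\<^sup>2) = 0" using assms l2norm_sq[OF assms(1)] by simp
  then have "AE x in M. (cmod (f x))\<^sup>2 = 0" using assms(1)
    by (subst integral_nonneg_eq_0_iff_AE[symmetric]) (auto simp: L2_def)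
  then show ?thesis by auto
qed


definition adm :: "'a measure \<Rightarrow> 'a set set \<Rightarrow> bool" where
  "adm M P \<longleftrightarrow> finite P \<and> disjoint P \<and> (\<forall>A\<in>P. A \<in> sets M \<and> 0 < measure M A \<and> emeasure M A < \<infinity>)"

definition kP :: "'a measure \<Rightarrow> 'a set set \<Rightarrow> 'a \<Rightarrow> 'a \<Rightarrow> complex" where
  "kP M P s t = (\<Sum>A\<in>P. (1 / complex_of_real (measure M A)) * (indicator A s * indicator A t))"

definition EP :: "'a measure \<Rightarrow> 'a set set \<Rightarrow> ('a \<Rightarrow> complex) \<Rightarrow> 'a \<Rightarrow> complex" where
  "EP M P h s = (\<Sum>A\<in>P. ((LINT t|M. indicator A t * h t) / complex_of_real (measure M A)) * indicator A s)"

lemma sum_ind_disj: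
  fixes c :: "'i \<Rightarrow> 'b::comm_ring_1"
  assumes "finite P" "\<And>A B. A \<in> P \<Longrightarrow> B \<in> P \<Longrightarrow> A \<noteq> B \<Longrightarrow> S A \<inter> S B = {}" "Az \<in> P" "z \<in> S Az"
  shows "(\<Sum>A\<in>P. c A * indicator (S A) z) = c Az"
proof -
  have "(\<Sum>A\<in>P. c A * indicator (S A) z) = (\<Sum>A\<in>P. if A = Az then c A else 0)"
  proof (intro sum.cong refl)
    fix A assume "A \<in> P"
    then show "c A * indicator (S A) z = (if A = Az then c A else 0)"
      using assms(2)[of A Az] assms(3,4) by (auto simp: indicator_def)
  qed
  also have "\<dots> = c Az" using assms(1,3) by simp
  finally show ?thesis .
qed

lemma sum_ind_out:
  fixes c :: "'i \<Rightarrow> 'b::comm_ring_1"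
  assumes "\<And>A. A \<in> P \<Longrightarrow> z \<notin> S A"
  shows "(\<Sum>A\<in>P. c A * indicator (S A) z) = 0"
  using assms by (intro sum.neutral) auto

lemma admD:
  assumes "adm M P"
  shows "finite P" "\<And>A B. A \<in> P \<Longrightarrow> B \<in> P \<Longrightarrow> A \<noteq> B \<Longrightarrow> A \<inter> B = {}"
    "\<And>A. A \<in> P \<Longrightarrow> A \<in> sets M" "\<And>A. A \<in> P \<Longrightarrow> 0 < measure M A"
    "\<And>A. A \<in> P \<Longrightarrow> emeasure M A < \<infinity>"
  using assms unfolding adm_def disjoint_def pairwise_def disjnt_def by auto

lemma adm_ind_L2: "adm M P \<Longrightarrow> A \<in> P \<Longrightarrow> (\<lambda>x. indicator A x :: complex) \<in> L2 M"
  using admD by (intro L2_indicator) auto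

lemma adm_ind_int: "adm M P \<Longrightarrow> A \<in> P \<Longrightarrow> h \<in> L2 M \<Longrightarrow> integrable M (\<lambda>t. indicator A t * h t)"
  using L2_prod_int adm_ind_L2 by blast

lemma kP_integral:
  assumes P: "adm M P" and u: "\<And>A. A \<in> P \<Longrightarrow> integrable M (\<lambda>t. indicator A t * u t)"
  shows "(LINT t|M. kP M P s t * u t) = EP M P u s"
proof -
  have "(\<lambda>t. kP M P s t * u t) = (\<lambda>t. \<Sum>A\<in>P. (indicator A s / complex_of_real (measure M A)) * (indicator A t * u t))"
    by (auto simp: kP_def sum_distrib_right intro!: sum.cong)
  then have "(LINT t|M. kP M P s t * u t) = (\<Sum>A\<in>P. LINT t|M. (indicator A s / complex_of_real (measure M A)) * (indicator A t * u t))"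
    using u by (simp add: Bochner_Integration.integral_sum)
  also have "\<dots> = EP M P u s"
    unfolding EP_def by (intro sum.cong) auto
  finally show ?thesis .
qed

lemma hs_op_kP: "adm M P \<Longrightarrow> h \<in> L2 M \<Longrightarrow> hs_op M (kP M P) h s = EP M P h s"
  unfolding hs_op_def by (rule kP_integral) (auto intro: adm_ind_int)

lemma EP_L2: "adm M P \<Longrightarrow> EP M P h \<in> L2 M"
  unfolding EP_def using adm_ind_L2 admD(1) by (intro L2_sum L2_cmult) auto

lemma EP_lin:
  assumes P: "adm M P" and f: "\<And>A. A \<in> P \<Longrightarrow> integrable M (\<lambda>t. indicator A t * f t)"
    and g: "\<And>A. A \<in> P \<Longrightarrow> integrable M (\<lambda>t. indicator A t * g t)"
  shows "EP M P (\<lambda>y. f y + c * g y) s = EP M P f s + c * EP M P g s"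
proof -
  have "\<And>A. A \<in> P \<Longrightarrow> (LINT t|M. indicator A t * (f t + c * g t)) = (LINT t|M. indicator A t * f t) + c * (LINT t|M. indicator A t * g t)"
  proof -
    fix A assume A: "A \<in> P"
    have "(LINT t|M. indicator A t * (f t + c * g t)) = (LINT t|M. indicator A t * f t + c * (indicator A t * g t))"
      by (simp add: algebra_simps)
    also have "\<dots> = (LINT t|M. indicator A t * f t) + c * (LINT t|M. indicator A t * g t)"
      using f[OF A] g[OF A] by simp
    finally show "?thesis A" .
  qed
  then show ?thesis unfolding EP_def
    by (simp add: sum_distrib_left sum.distrib[symmetric] algebra_simps add_divide_distrib)
qed

lemma EP_diff:
  assumes P: "adm M P" and f: "\<And>A. A \<in> P \<Longrightarrow> integrable M (\<lambda>t. indicator A t * f t)"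
    and g: "\<And>A. A \<in> P \<Longrightarrow> integrable M (\<lambda>t. indicator A t * g t)"
  shows "EP M P (\<lambda>y. f y - g y) s = EP M P f s - EP M P g s"
  using EP_lin[OF P f g, of "-1" s] by simp

lemma cmod_ind_sq[simp]: "(cmod (indicator A x :: complex))\<^sup>2 = indicator A x"
  by (simp add: indicator_def)
lemma cmod_ind[simp]: "cmod (indicator A x :: complex) = indicator A x"
  by (simp add: indicator_def)

lemma ind_sq_real[simp]: "(indicator A x :: real)\<^sup>2 = indicator A x"
  by (simp add: indicator_def)

lemma ind_cs:
  assumes A: "A \<in> sets M" "emeasure M A < \<infinity>" and h: "h \<in> L2 M"
  shows "(cmod (LINT t|M. indicator A t * h t))\<^sup>2 \<le> measure M A * (LINT t|M. indicator A t * (cmod (h t))\<^sup>2)"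
proof -
  have iA: "(\<lambda>x. indicator A x :: complex) \<in> L2 M" using L2_indicator[OF A] .
  have iAh: "(\<lambda>t. indicator A t * h t) \<in> L2 M"
    using L2_bmult[OF h, of "indicator A" 1] A by (auto simp: indicator_def)
  have "cmod (LINT t|M. indicator A t * h t) \<le> (LINT t|M. norm (indicator A t * h t))"
    by (rule integral_norm_bound)
  also have "\<dots> = (LINT t|M. cmod (indicator A t :: complex) * cmod (indicator A t * h t))"
    by (intro Bochner_Integration.integral_cong) (auto simp: indicator_def)
  also have "\<dots> \<le> l2norm M (indicator A) * l2norm M (\<lambda>t. indicator A t * h t)"
    by (rule L2_cs_real[OF iA iAh])
  finally have *: "cmod (LINT t|M. indicator A t * h t) \<le> l2norm M (indicator A) * l2norm M (\<lambda>t. indicator A t * h t)" .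
  have "(cmod (LINT t|M. indicator A t * h t))\<^sup>2 \<le> (l2norm M (indicator A) * l2norm M (\<lambda>t. indicator A t * h t))\<^sup>2"
    using * by (intro power_mono) auto
  also have "\<dots> = (l2norm M (indicator A))\<^sup>2 * (l2norm M (\<lambda>t. indicator A t * h t))\<^sup>2"
    by (simp add: power_mult_distrib)
  also have "(l2norm M (indicator A))\<^sup>2 = measure M A"
  proof -
    have "(\<lambda>x. (cmod (indicator A x :: complex))\<^sup>2) = indicator A" by (auto simp: indicator_def)
    then show ?thesis using l2norm_sq[OF iA] A sets.sets_into_space[OF A(1)]
      by (simp add: Int_absorb2)
  qed
  also have "(l2norm M (\<lambda>t. indicator A t * h t))\<^sup>2 = (LINT t|M. indicator A t * (cmod (h t))\<^sup>2)"
    using l2norm_sq[OF iAh] by (simp add: norm_mult power_mult_distrib)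
  finally show ?thesis .
qed

lemma measure_ind_integral: "A \<in> sets M \<Longrightarrow> (LINT x|M. indicator A x :: real) = measure M A"
  using sets.sets_into_space by (simp add: Int_absorb2)

lemma EP_contract:
  assumes P: "adm M P" and h: "h \<in> L2 M"
  shows "l2norm M (EP M P h) \<le> l2norm M h"
proof -
  define c where "c A = (LINT t|M. indicator A t * h t) / complex_of_real (measure M A)" for A
  have EPc: "EP M P h s = (\<Sum>A\<in>P. c A * indicator A s)" for s unfolding EP_def c_def ..
  have disj: "\<And>A B. A \<in> P \<Longrightarrow> B \<in> P \<Longrightarrow> A \<noteq> B \<Longrightarrow> id A \<inter> id B = {}" using admD(2)[OF P] by simp
  have fin: "finite P" using admD(1)[OF P] .
  have pw: "(cmod (EP M P h s))\<^sup>2 = (\<Sum>A\<in>P. (cmod (c A))\<^sup>2 * indicator A s)" for s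
  proof (cases "\<exists>A0\<in>P. s \<in> A0")
    case True then obtain A0 where A0: "A0 \<in> P" "s \<in> A0" by auto
    have "EP M P h s = c A0" unfolding EPc
      using sum_ind_disj[where S=id and c=c and z=s and Az=A0 and P=P, OF fin disj] A0 by simp
    moreover have "(\<Sum>A\<in>P. (cmod (c A))\<^sup>2 * indicator A s) = (cmod (c A0))\<^sup>2"
      using sum_ind_disj[where S=id and c="\<lambda>A. (cmod (c A))\<^sup>2" and z=s and Az=A0 and P=P, OF fin disj] A0 by simp
    ultimately show ?thesis by simp
  next
    case False
    then have "EP M P h s = 0" unfolding EPc using sum_ind_out[where S=id and c=c and z=s and P=P] by auto
    moreover have "(\<Sum>A\<in>P. (cmod (c A))\<^sup>2 * indicator A s) = 0"
      using False sum_ind_out[where S=id and c="\<lambda>A. (cmod (c A))\<^sup>2" and z=s and P=P] by auto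
    ultimately show ?thesis by simp
  qed
  have int_ind: "integrable M (\<lambda>s. (cmod (c A))\<^sup>2 * indicator A s)" if "A \<in> P" for A
    using admD(3,5)[OF P that] by simp
  have hi: "integrable M (\<lambda>t. (cmod (h t))\<^sup>2)" using h by (simp add: L2_def)
  have int_ind2: "integrable M (\<lambda>t. (cmod (h t))\<^sup>2 * indicator A t)" if "A \<in> P" for A
    using admD(3)[OF P that] hi by (rule integrable_real_mult_indicator)
  have "(LINT s|M. (cmod (EP M P h s))\<^sup>2) = (LINT s|M. (\<Sum>A\<in>P. (cmod (c A))\<^sup>2 * indicator A s))"
    unfolding pw ..
  also have "\<dots> = (\<Sum>A\<in>P. LINT s|M. (cmod (c A))\<^sup>2 * indicator A s)"
    using int_ind by (simp add: Bochner_Integration.integral_sum)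
  also have "\<dots> = (\<Sum>A\<in>P. (cmod (c A))\<^sup>2 * measure M A)"
    using admD(3)[OF P] by (intro sum.cong refl) (simp add: measure_ind_integral)
  also have "\<dots> \<le> (\<Sum>A\<in>P. LINT t|M. (cmod (h t))\<^sup>2 * indicator A t)"
  proof (rule sum_mono)
    fix A assume A: "A \<in> P"
    have mp: "measure M A > 0" using admD(4)[OF P A] .
    have cs: "(cmod (LINT t|M. indicator A t * h t))\<^sup>2 \<le> measure M A * (LINT t|M. indicator A t * (cmod (h t))\<^sup>2)"
      using ind_cs[OF admD(3,5)[OF P A] h] .
    have "(cmod (c A))\<^sup>2 * measure M A = (cmod (LINT t|M. indicator A t * h t))\<^sup>2 / measure M A"
      unfolding c_def using mp by (simp add: norm_divide power2_eq_square field_simps)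
    also have "\<dots> \<le> (LINT t|M. indicator A t * (cmod (h t))\<^sup>2)"
      using cs mp by (simp add: divide_le_eq mult.commute)
    also have "\<dots> = (LINT t|M. (cmod (h t))\<^sup>2 * indicator A t)" by (simp add: mult.commute)
    finally show "(cmod (c A))\<^sup>2 * measure M A \<le> (LINT t|M. (cmod (h t))\<^sup>2 * indicator A t)" .
  qed
  also have "\<dots> = (LINT t|M. (\<Sum>A\<in>P. (cmod (h t))\<^sup>2 * indicator A t))"
    using int_ind2 by (simp add: Bochner_Integration.integral_sum)
  also have "\<dots> \<le> (LINT t|M. (cmod (h t))\<^sup>2)"
  proof (rule integral_mono)
    show "integrable M (\<lambda>t. \<Sum>A\<in>P. (cmod (h t))\<^sup>2 * indicator A t)" using int_ind2 by simp
    show "integrable M (\<lambda>t. (cmod (h t))\<^sup>2)" by (rule hi)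
    fix t
    show "(\<Sum>A\<in>P. (cmod (h t))\<^sup>2 * indicator A t) \<le> (cmod (h t))\<^sup>2"
    proof (cases "\<exists>A0\<in>P. t \<in> A0")
      case True then obtain A0 where A0: "A0 \<in> P" "t \<in> A0" by auto
      show ?thesis using sum_ind_disj[where S=id and c="\<lambda>A. (cmod (h t))\<^sup>2" and z=t and Az=A0 and P=P, OF fin disj] A0 by simp
    next
      case False
      then show ?thesis using sum_ind_out[where S=id and c="\<lambda>A. (cmod (h t))\<^sup>2" and z=t and P=P] by auto
    qed
  qed
  finally show ?thesis unfolding l2norm_def by (rule real_sqrt_le_mono)
qed

lemma kP_bounded:
  assumes P: "adm M P"
  shows "bounded_op M (hs_op M (kP M P))"
  unfolding bounded_op_def
proof (intro conjI ballI allI)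
  fix h assume h: "h \<in> L2 M"
  have "hs_op M (kP M P) h = EP M P h" using hs_op_kP[OF P h] by auto
  then show "hs_op M (kP M P) h \<in> L2 M" using EP_L2[OF P] by simp
next
  fix f g c assume f: "f \<in> L2 M" and g: "g \<in> L2 M"
  have fg: "(\<lambda>y. f y + c * g y) \<in> L2 M" using L2_add[OF f L2_cmult[OF g]] .
  show "AE x in M. hs_op M (kP M P) (\<lambda>y. f y + c * g y) x = hs_op M (kP M P) f x + c * hs_op M (kP M P) g x"
    using hs_op_kP[OF P fg] hs_op_kP[OF P f] hs_op_kP[OF P g]
      EP_lin[OF P adm_ind_int[OF P _ f] adm_ind_int[OF P _ g]] by simp
next
  show "\<exists>C. op_bound M (hs_op M (kP M P)) C"
    unfolding op_bound_def
  proof (intro exI[of _ 1] ballI)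
    fix h assume h: "h \<in> L2 M"
    have "hs_op M (kP M P) h = EP M P h" using hs_op_kP[OF P h] by auto
    then show "l2norm M (hs_op M (kP M P) h) \<le> 1 * l2norm M h" using EP_contract[OF P h] by simp
  qed
qed

lemma kP_L2_kernel:
  assumes sf: "sigma_finite_measure M" and P: "adm M P"
  shows "L2_kernel M (kP M P)"
  unfolding L2_kernel_def
proof
  have fin: "finite P" using admD(1)[OF P] .
  have kk: "kP M P s t = (\<Sum>A\<in>P. (1 / complex_of_real (measure M A)) * indicator (A \<times> A) (s, t))" for s t
    unfolding kP_def by (intro sum.cong refl) (simp add: indicator_times)
  show "(\<lambda>z. kP M P (fst z) (snd z)) \<in> borel_measurable (M \<Otimes>\<^sub>M M)"
    unfolding kP_def
  proof (rule borel_measurable_sum)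
    fix A assume "A \<in> P"
    then have [measurable]: "A \<in> sets M" using admD(3)[OF P] by auto
    show "(\<lambda>z. (1 / complex_of_real (measure M A)) * (indicator A (fst z) * indicator A (snd z))) \<in> borel_measurable (M \<Otimes>\<^sub>M M)"
      by measurable
  qed
  have disj: "\<And>A B. A \<in> P \<Longrightarrow> B \<in> P \<Longrightarrow> A \<noteq> B \<Longrightarrow> (\<lambda>A. A \<times> A) A \<inter> (\<lambda>A. A \<times> A) B = {}"
    using admD(2)[OF P] by auto
  have pw: "(cmod (kP M P (fst z) (snd z)))\<^sup>2 = (\<Sum>A\<in>P. (1 / measure M A)\<^sup>2 * indicator (A \<times> A) z)" for z
  proof (cases "\<exists>A0\<in>P. z \<in> A0 \<times> A0")
    case True then obtain A0 where A0: "A0 \<in> P" "z \<in> A0 \<times> A0" by auto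
    have "kP M P (fst z) (snd z) = 1 / complex_of_real (measure M A0)" unfolding kk
      using sum_ind_disj[where S="\<lambda>A. A \<times> A" and c="\<lambda>A. 1 / complex_of_real (measure M A)" and z=z and Az=A0 and P=P, OF fin disj] A0 by simp
    moreover have "(\<Sum>A\<in>P. (1 / measure M A)\<^sup>2 * indicator (A \<times> A) z) = (1 / measure M A0)\<^sup>2"
      using sum_ind_disj[where S="\<lambda>A. A \<times> A" and c="\<lambda>A. (1 / measure M A)\<^sup>2" and z=z and Az=A0 and P=P, OF fin disj] A0 by simp
    moreover have "measure M A0 \<ge> 0" by simp
    ultimately show ?thesis by (simp add: norm_divide)
  next
    case False
    then have "kP M P (fst z) (snd z) = 0" unfolding kk
      using sum_ind_out[where S="\<lambda>A. A \<times> A" and c="\<lambda>A. 1 / complex_of_real (measure M A)" and z=z and P=P] by auto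
    moreover have "(\<Sum>A\<in>P. (1 / measure M A)\<^sup>2 * indicator (A \<times> A) z) = 0"
      using False sum_ind_out[where S="\<lambda>A. A \<times> A" and c="\<lambda>A. (1 / measure M A)\<^sup>2" and z=z and P=P] by auto
    ultimately show ?thesis by simp
  qed
  have "integrable (M \<Otimes>\<^sub>M M) (\<lambda>z. \<Sum>A\<in>P. (1 / measure M A)\<^sup>2 * indicator (A \<times> A) z)"
  proof (rule Bochner_Integration.integrable_sum)
    fix A assume A: "A \<in> P"
    have As: "A \<in> sets M" and Af: "emeasure M A < \<infinity>" using admD(3,5)[OF P A] by auto
    have "emeasure (M \<Otimes>\<^sub>M M) (A \<times> A) = emeasure M A * emeasure M A"
      using sigma_finite_measure.emeasure_pair_measure_Times[OF sf As As] .
    also have "\<dots> < \<infinity>" using Af by (simp add: ennreal_mult_less_top)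
    finally have "integrable (M \<Otimes>\<^sub>M M) (indicator (A \<times> A) :: _ \<Rightarrow> real)"
      using As by (intro integrable_real_indicator) auto
    then show "integrable (M \<Otimes>\<^sub>M M) (\<lambda>z. (1 / measure M A)\<^sup>2 * indicator (A \<times> A) z)" by simp
  qed
  then show "integrable (M \<Otimes>\<^sub>M M) (\<lambda>z. (cmod (kP M P (fst z) (snd z)))\<^sup>2)"
    unfolding pw .
qed


lemma simple_L2_approx:
  assumes z: "z \<in> L2 M" and e: "e > 0"
  shows "\<exists>s. simple_function M s \<and> s \<in> L2 M \<and> l2norm M (\<lambda>x. z x - s x) \<le> e \<and>
    (\<forall>c. c \<noteq> 0 \<longrightarrow> emeasure M (s -` {c} \<inter> space M) < \<infinity>)"
proof -
  have zm[measurable]: "z \<in> borel_measurable M" and zi: "integrable M (\<lambda>x. (cmod (z x))\<^sup>2)"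
    using z by (auto simp: L2_def)
  obtain F where F: "\<forall>i. simple_function M (F i)" "\<forall>x\<in>space M. (\<lambda>i. F i x) \<longlonglongrightarrow> z x"
    "\<forall>i. \<forall>x\<in>space M. dist (F i x) 0 \<le> 2 * dist (z x) 0"
    using borel_measurable_implies_sequence_metric[OF zm, of 0] by blast
  have Fm[measurable]: "\<And>i. F i \<in> borel_measurable M" using F(1) borel_measurable_simple_function by blast
  have Fb: "\<And>i x. x \<in> space M \<Longrightarrow> cmod (F i x) \<le> 2 * cmod (z x)" using F(3) by (simp add: dist_norm)
  have lim: "(\<lambda>i. LINT x|M. (cmod (z x - F i x))\<^sup>2) \<longlonglongrightarrow> (LINT x|M. (0::real))"
  proof (rule integral_dominated_convergence[where w="\<lambda>x. 9 * (cmod (z x))\<^sup>2"])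
    show "(\<lambda>x. 0::real) \<in> borel_measurable M" by simp
    show "\<And>i. (\<lambda>x. (cmod (z x - F i x))\<^sup>2) \<in> borel_measurable M" by measurable
    show "integrable M (\<lambda>x. 9 * (cmod (z x))\<^sup>2)" using zi by simp
    show "AE x in M. (\<lambda>i. (cmod (z x - F i x))\<^sup>2) \<longlonglongrightarrow> 0"
    proof (rule AE_I2)
      fix x assume x: "x \<in> space M"
      have "(\<lambda>i. z x - F i x) \<longlonglongrightarrow> z x - z x"
        using tendsto_diff[OF tendsto_const F(2)[rule_format, OF x]] .
      then have "(\<lambda>i. (cmod (z x - F i x))\<^sup>2) \<longlonglongrightarrow> (cmod (z x - z x))\<^sup>2"
        by (intro tendsto_power tendsto_norm)
      then show "(\<lambda>i. (cmod (z x - F i x))\<^sup>2) \<longlonglongrightarrow> 0" by simp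
    qed
    show "\<And>i. AE x in M. norm ((cmod (z x - F i x))\<^sup>2) \<le> 9 * (cmod (z x))\<^sup>2"
    proof (rule AE_I2)
      fix i x assume x: "x \<in> space M"
      have "cmod (z x - F i x) \<le> cmod (z x) + cmod (F i x)" by (rule norm_triangle_ineq4)
      also have "\<dots> \<le> 3 * cmod (z x)" using Fb[OF x, of i] by simp
      finally have "(cmod (z x - F i x))\<^sup>2 \<le> (3 * cmod (z x))\<^sup>2" by (intro power_mono) auto
      then show "norm ((cmod (z x - F i x))\<^sup>2) \<le> 9 * (cmod (z x))\<^sup>2" by (simp add: power_mult_distrib)
    qed
  qed
  then have "(\<lambda>i. LINT x|M. (cmod (z x - F i x))\<^sup>2) \<longlonglongrightarrow> 0" by simp
  moreover have "e\<^sup>2 > 0" using e by simp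
  ultimately have "eventually (\<lambda>i. (LINT x|M. (cmod (z x - F i x))\<^sup>2) < e\<^sup>2) sequentially"
    by (rule order_tendstoD(2))
  then obtain i where i: "(LINT x|M. (cmod (z x - F i x))\<^sup>2) < e\<^sup>2"
    by (auto simp: eventually_sequentially)
  have "l2norm M (\<lambda>x. z x - F i x) \<le> sqrt (e\<^sup>2)"
    unfolding l2norm_def using i by (intro real_sqrt_le_mono) simp
  then have n: "l2norm M (\<lambda>x. z x - F i x) \<le> e" using e by simp
  have L2: "F i \<in> L2 M"
  proof -
    have "integrable M (\<lambda>x. (cmod (F i x))\<^sup>2)"
    proof (rule Bochner_Integration.integrable_bound[where f="\<lambda>x. 4 * (cmod (z x))\<^sup>2"])
      show "integrable M (\<lambda>x. 4 * (cmod (z x))\<^sup>2)" using zi by simp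
      show "(\<lambda>x. (cmod (F i x))\<^sup>2) \<in> borel_measurable M" by measurable
      show "AE x in M. norm ((cmod (F i x))\<^sup>2) \<le> norm (4 * (cmod (z x))\<^sup>2)"
      proof (rule AE_I2)
        fix x assume x: "x \<in> space M"
        have "(cmod (F i x))\<^sup>2 \<le> (2 * cmod (z x))\<^sup>2" using Fb[OF x, of i] by (intro power_mono) auto
        then show "norm ((cmod (F i x))\<^sup>2) \<le> norm (4 * (cmod (z x))\<^sup>2)" by (simp add: power_mult_distrib)
      qed
    qed
    then show ?thesis by (simp add: L2_def)
  qed
  have lev: "emeasure M (F i -` {c} \<inter> space M) < \<infinity>" if c: "c \<noteq> 0" for c
  proof -
    let ?S = "F i -` {c} \<inter> space M"
    have S: "?S \<in> sets M" using F(1) by (simp add: simple_functionD(2))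
    have "integrable M (indicator ?S :: 'a \<Rightarrow> real)"
    proof (rule Bochner_Integration.integrable_bound[where f="\<lambda>x. (4 / (cmod c)\<^sup>2) * (cmod (z x))\<^sup>2"])
      show "integrable M (\<lambda>x. (4 / (cmod c)\<^sup>2) * (cmod (z x))\<^sup>2)" using zi by simp
      show "(indicator ?S :: 'a \<Rightarrow> real) \<in> borel_measurable M" using S by simp
      show "AE x in M. norm (indicator ?S x :: real) \<le> norm ((4 / (cmod c)\<^sup>2) * (cmod (z x))\<^sup>2)"
      proof (rule AE_I2)
        fix x assume x: "x \<in> space M"
        show "norm (indicator ?S x :: real) \<le> norm ((4 / (cmod c)\<^sup>2) * (cmod (z x))\<^sup>2)"
        proof (cases "x \<in> ?S")
          case True
          then have "F i x = c" by auto
          then have "cmod c \<le> 2 * cmod (z x)" using Fb[OF x, of i] by simp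
          then have "(cmod c)\<^sup>2 \<le> (2 * cmod (z x))\<^sup>2" by (intro power_mono) auto
          then have "1 \<le> (4 / (cmod c)\<^sup>2) * (cmod (z x))\<^sup>2" using c
            by (simp add: power_mult_distrib field_simps)
          then show ?thesis using True by simp
        qed simp
      qed
    qed
    then show ?thesis by (simp add: integrable_indicator_iff Int_absorb2)
  qed
  show ?thesis using F(1) L2 n lev by blast
qed

lemma partition_exists:
  assumes fin: "finite Z" and s: "\<And>z. z \<in> Z \<Longrightarrow> simple_function M (s z)"
    and lev: "\<And>z c. z \<in> Z \<Longrightarrow> c \<noteq> 0 \<Longrightarrow> emeasure M (s z -` {c} \<inter> space M) < \<infinity>"
  shows "\<exists>P. adm M P \<and> (\<forall>z\<in>Z. AE x in M. EP M P (s z) x = s z x)"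
proof -
  define \<sigma> where "\<sigma> x = (\<lambda>z\<in>Z. s z x)" for x
  define V where "V = {v \<in> \<sigma> ` space M. \<exists>z\<in>Z. v z \<noteq> 0}"
  define C where "C v = {x \<in> space M. \<sigma> x = v}" for v
  define P where "P = C ` {v\<in>V. measure M (C v) > 0}"
  have "\<sigma> ` space M \<subseteq> (\<Pi>\<^sub>E z\<in>Z. s z ` space M)" unfolding \<sigma>_def by auto
  moreover have "finite (\<Pi>\<^sub>E z\<in>Z. s z ` space M)"
    using fin s by (intro finite_PiE) (auto simp: simple_functionD(1))
  ultimately have finS: "finite (\<sigma> ` space M)" by (rule finite_subset)
  then have finV: "finite V" unfolding V_def by simp
  have Ceq: "C v = {x \<in> space M. \<forall>z\<in>Z. s z x = v z}" if vS: "v \<in> \<sigma> ` space M" for v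
  proof -
    obtain y where v: "v = \<sigma> y" using vS by auto
    show ?thesis unfolding C_def v \<sigma>_def by (auto simp: restrict_def fun_eq_iff)
  qed
  have Cmeas: "C v \<in> sets M" if "v \<in> \<sigma> ` space M" for v
    unfolding Ceq[OF that]
  proof (rule sets.sets_Collect_finite_All[OF _ fin])
    fix z assume "z \<in> Z"
    then have "s z -` {v z} \<inter> space M \<in> sets M" using s by (simp add: simple_functionD(2))
    moreover have "{x \<in> space M. s z x = v z} = s z -` {v z} \<inter> space M" by auto
    ultimately show "{x \<in> space M. s z x = v z} \<in> sets M" by simp
  qed
  have Cfin: "emeasure M (C v) < \<infinity>" if v: "v \<in> V" for v
  proof -
    obtain z where z: "z \<in> Z" "v z \<noteq> 0" using v unfolding V_def by auto
    have vS: "v \<in> \<sigma> ` space M" using v unfolding V_def by auto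
    have "C v \<subseteq> s z -` {v z} \<inter> space M" unfolding Ceq[OF vS] using z by auto
    then have "emeasure M (C v) \<le> emeasure M (s z -` {v z} \<inter> space M)"
      by (intro emeasure_mono) (use s z in \<open>auto simp: simple_functionD(2)\<close>)
    also have "\<dots> < \<infinity>" using lev z by auto
    finally show ?thesis .
  qed
  have Cdisj: "C v \<inter> C w = {}" if "v \<noteq> w" for v w
    using that unfolding C_def by auto
  have adm: "adm M P"
    unfolding adm_def
  proof (intro conjI ballI)
    show "finite P" unfolding P_def using finV by simp
    show "disjoint P" unfolding disjoint_def pairwise_def disjnt_def
    proof (intro ballI impI)
      fix A B assume AB: "A \<in> P" "B \<in> P" "A \<noteq> B"
      then obtain v w where vw: "A = C v" "B = C w" unfolding P_def by auto
      with AB have "v \<noteq> w" by auto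
      then show "A \<inter> B = {}" using Cdisj vw by simp
    qed
    fix A assume "A \<in> P"
    then obtain v where v: "v \<in> V" "measure M (C v) > 0" "A = C v" unfolding P_def by auto
    have vS: "v \<in> \<sigma> ` space M" using v unfolding V_def by auto
    show "A \<in> sets M" using Cmeas[OF vS] v by simp
    show "0 < measure M A" using v by simp
    show "emeasure M A < \<infinity>" using Cfin[OF v(1)] v by simp
  qed
  have null: "AE x in M. \<forall>v\<in>{v\<in>V. measure M (C v) = 0}. x \<notin> C v"
  proof (rule AE_finite_allI)
    show "finite {v\<in>V. measure M (C v) = 0}" using finV by simp
    fix v assume v: "v \<in> {v\<in>V. measure M (C v) = 0}"
    have vS: "v \<in> \<sigma> ` space M" using v unfolding V_def by auto
    have "emeasure M (C v) = 0"
      using Cfin[of v] v by (simp add: emeasure_eq_ennreal_measure)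
    then have "C v \<in> null_sets M" using Cmeas[OF vS] by auto
    then show "AE x in M. x \<notin> C v" by (rule AE_not_in)
  qed
  have "AE x in M. EP M P (s z) x = s z x" if z: "z \<in> Z" for z
    using null
  proof (rule AE_mp[OF _ AE_I2[OF impI]])
    fix x assume x: "x \<in> space M" and nx: "\<forall>v\<in>{v \<in> V. measure M (C v) = 0}. x \<notin> C v"
    define v where "v = \<sigma> x"
    have xC: "x \<in> C v" unfolding C_def v_def using x by simp
    have finP: "finite P" using admD(1)[OF adm] .
    have disj: "\<And>A B. A \<in> P \<Longrightarrow> B \<in> P \<Longrightarrow> A \<noteq> B \<Longrightarrow> id A \<inter> id B = {}" using admD(2)[OF adm] by simp
    show "EP M P (s z) x = s z x"
    proof (cases "v \<in> V")
      case True
      then have mp: "measure M (C v) > 0" using nx xC by (auto simp: less_le)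
      then have CP: "C v \<in> P" unfolding P_def using True by auto
      have vS: "v \<in> \<sigma> ` space M" using x unfolding v_def by auto
      have sv: "s z y = v z" if "y \<in> C v" for y using that z unfolding Ceq[OF vS] by auto
      have "(LINT t|M. indicator (C v) t * s z t) = (LINT t|M. v z * indicator (C v) t)"
        by (intro Bochner_Integration.integral_cong refl) (auto simp: indicator_def sv)
      also have "\<dots> = v z * complex_of_real (measure M (C v))"
      proof -
        have ii: "(\<lambda>t. indicator (C v) t :: complex) = (\<lambda>t. complex_of_real (indicator (C v) t))"
          by (auto simp: indicator_def)
        have "(LINT t|M. (indicator (C v) t :: complex)) = complex_of_real (LINT t|M. indicator (C v) t)"
          unfolding ii by (rule integral_complex_of_real)
        then show ?thesis using measure_ind_integral[OF Cmeas[OF vS]] by simp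
      qed
      finally have int: "(LINT t|M. indicator (C v) t * s z t) = v z * complex_of_real (measure M (C v))" .
      have "EP M P (s z) x = (LINT t|M. indicator (C v) t * s z t) / complex_of_real (measure M (C v))"
        unfolding EP_def
        using sum_ind_disj[where S=id and c="\<lambda>A. (LINT t|M. indicator A t * s z t) / complex_of_real (measure M A)"
            and z=x and Az="C v" and P=P, OF finP disj CP] xC by simp
      also have "\<dots> = v z" unfolding int using mp by simp
      also have "\<dots> = s z x" using sv[OF xC] by simp
      finally show ?thesis .
    next
      case False
      then have "s z x = 0" using z x unfolding V_def v_def \<sigma>_def by auto
      moreover have "x \<notin> A" if "A \<in> P" for A
      proof
        assume xA: "x \<in> A"
        obtain w where w: "w \<in> V" "A = C w" using \<open>A \<in> P\<close> unfolding P_def by auto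
        then have "w = v" using xA unfolding C_def v_def by auto
        then show False using w False by simp
      qed
      then have "EP M P (s z) x = 0" unfolding EP_def
        using sum_ind_out[where S=id and c="\<lambda>A. (LINT t|M. indicator A t * s z t) / complex_of_real (measure M A)"
            and z=x and P=P] by auto
      ultimately show ?thesis by simp
    qed
  qed
  then show ?thesis using adm by blast
qed

lemma approx_EP:
  assumes fin: "finite Z" and Z: "Z \<subseteq> L2 M" and e: "e > 0"
  shows "\<exists>P. adm M P \<and> (\<forall>z\<in>Z. l2norm M (\<lambda>x. EP M P z x - z x) \<le> e)"
proof -
  have "\<forall>z\<in>Z. \<exists>s. simple_function M s \<and> s \<in> L2 M \<and> l2norm M (\<lambda>x. z x - s x) \<le> e / 2 \<and>
    (\<forall>c. c \<noteq> 0 \<longrightarrow> emeasure M (s -` {c} \<inter> space M) < \<infinity>)"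
  proof
    fix z assume "z \<in> Z"
    then have "z \<in> L2 M" using Z by auto
    then show "\<exists>s. simple_function M s \<and> s \<in> L2 M \<and> l2norm M (\<lambda>x. z x - s x) \<le> e / 2 \<and>
      (\<forall>c. c \<noteq> 0 \<longrightarrow> emeasure M (s -` {c} \<inter> space M) < \<infinity>)"
      using simple_L2_approx[of z M "e/2"] e by simp
  qed
  from bchoice[OF this] obtain s where s0: "\<forall>z\<in>Z. simple_function M (s z) \<and> s z \<in> L2 M \<and> l2norm M (\<lambda>x. z x - s z x) \<le> e / 2 \<and>
    (\<forall>c. c \<noteq> 0 \<longrightarrow> emeasure M (s z -` {c} \<inter> space M) < \<infinity>)" ..
  have s: "\<And>z. z \<in> Z \<Longrightarrow> simple_function M (s z) \<and> s z \<in> L2 M \<and> l2norm M (\<lambda>x. z x - s z x) \<le> e / 2 \<and>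
    (\<forall>c. c \<noteq> 0 \<longrightarrow> emeasure M (s z -` {c} \<inter> space M) < \<infinity>)" using s0 by blast
  obtain P where P: "adm M P" and Ps: "\<And>z. z \<in> Z \<Longrightarrow> AE x in M. EP M P (s z) x = s z x"
    using partition_exists[OF fin, where s=s and M=M] s by blast
  have "l2norm M (\<lambda>x. EP M P z x - z x) \<le> e" if z: "z \<in> Z" for z
  proof -
    have zL: "z \<in> L2 M" using Z z by auto
    have sL: "s z \<in> L2 M" using s[OF z] by auto
    have dL: "(\<lambda>x. z x - s z x) \<in> L2 M" using L2_diff[OF zL sL] .
    have E1: "EP M P (\<lambda>x. z x - s z x) x = EP M P z x - EP M P (s z) x" for x
      using EP_diff[OF P adm_ind_int[OF P _ zL] adm_ind_int[OF P _ sL]] .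
    have ae: "AE x in M. EP M P z x - z x = EP M P (\<lambda>x. z x - s z x) x + (s z x - z x)"
      using Ps[OF z] by eventually_elim (simp add: E1)
    have "l2norm M (\<lambda>x. EP M P z x - z x) = l2norm M (\<lambda>x. EP M P (\<lambda>x. z x - s z x) x + (s z x - z x))"
      using ae EP_L2[OF P, of z] EP_L2[OF P, of "\<lambda>x. z x - s z x"] zL sL
      by (intro l2norm_cong_AE) (auto simp: L2_def)
    also have "\<dots> \<le> l2norm M (EP M P (\<lambda>x. z x - s z x)) + l2norm M (\<lambda>x. s z x - z x)"
      by (rule l2norm_triangle[OF EP_L2[OF P] L2_diff[OF sL zL]])
    also have "\<dots> \<le> l2norm M (\<lambda>x. z x - s z x) + l2norm M (\<lambda>x. z x - s z x)"
      using EP_contract[OF P dL] l2norm_minus_commute[of M "s z" z] by simp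
    also have "\<dots> \<le> e" using s[OF z] by simp
    finally show ?thesis .
  qed
  then show ?thesis using P by blast
qed


lemma cinner_zero_left[simp]: "cinner (0::'h::chilbert) y = 0"
  using cinner_add_left[of "0::'h" 0 y] by simp

lemma cinner_zero_right[simp]: "cinner (x::'h::chilbert) 0 = 0"
  using cinner_commute[of x 0] by simp

lemma cinner_add_right: "cinner (x::'h::chilbert) (y + z) = cinner x y + cinner x z"
  using cinner_commute[of x "y+z"] cinner_commute[of x y] cinner_commute[of x z] cinner_add_left[of y z x]
  by simp

lemma cinner_scaleC_right: "cinner (x::'h::chilbert) (scaleC c y) = cnj c * cinner x y"
  using cinner_commute[of x "scaleC c y"] cinner_commute[of x y] cinner_scaleC_left[of c y x]
  by simp

lemma scaleC_minus1: "scaleC (-1) (x::'h::chilbert) = - x"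
  using scaleR_scaleC[of "-1" x] by simp

lemma cinner_minus_left: "cinner (- x::'h::chilbert) y = - cinner x y"
  using cinner_scaleC_left[of "-1" x y] scaleC_minus1[of x] by simp

lemma cinner_minus_right: "cinner (x::'h::chilbert) (- y) = - cinner x y"
  using cinner_scaleC_right[of x "-1" y] scaleC_minus1[of y] by simp

lemma cinner_diff_left: "cinner ((x::'h::chilbert) - y) z = cinner x z - cinner y z"
  using cinner_add_left[of x "-y" z] cinner_minus_left[of y z] by simp

lemma cinner_diff_right: "cinner (x::'h::chilbert) (y - z) = cinner x y - cinner x z"
  using cinner_add_right[of x y "-z"] cinner_minus_right[of x z] by simp

lemma cinner_self: "cinner (x::'h::chilbert) x = complex_of_real ((norm x)\<^sup>2)"
proof -
  have im: "Im (cinner x x) = 0"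
    using cinner_commute[of x x] by (metis cnj.simps(2) neg_equal_zero)
  have re: "Re (cinner x x) \<ge> 0"
  proof (rule ccontr)
    assume "\<not> Re (cinner x x) \<ge> 0"
    then have "sqrt (Re (cinner x x)) < 0" by simp
    then show False using norm_cinner[of x] norm_ge_zero[of x] by linarith
  qed
  have "(norm x)\<^sup>2 = Re (cinner x x)" using norm_cinner[of x] re by simp
  then show ?thesis using im by (simp add: complex_eq_iff)
qed

lemma cinner_cs: "cmod (cinner (x::'h::chilbert) y) \<le> norm x * norm y"
proof (cases "y = 0")
  case True then show ?thesis by simp
next
  case False
  define b where "b = cinner x y"
  define ny where "ny = norm y"
  define nx where "nx = norm x"
  have nyp: "ny > 0" using False unfolding ny_def by simp
  define t where "t = b / complex_of_real (ny\<^sup>2)"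
  define z where "z = x - scaleC t y"
  have yx: "cinner y x = cnj b" unfolding b_def by (rule cinner_commute)
  have xx: "cinner x x = complex_of_real (nx\<^sup>2)" unfolding nx_def by (rule cinner_self)
  have yy: "cinner y y = complex_of_real (ny\<^sup>2)" unfolding ny_def by (rule cinner_self)
  have "cinner z z = cinner x x - cnj t * b - t * (cnj b - cnj t * cinner y y)"
    unfolding z_def cinner_diff_left cinner_diff_right cinner_scaleC_left cinner_scaleC_right b_def yx
    by (simp add: algebra_simps)
  also have "\<dots> = complex_of_real (nx\<^sup>2 - (cmod b)\<^sup>2 / ny\<^sup>2)"
  proof -
    have bb: "b * cnj b = complex_of_real ((cmod b)\<^sup>2)" by (rule complex_norm_square[symmetric])
    have "cnj t * b = complex_of_real ((cmod b)\<^sup>2 / ny\<^sup>2)"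
      unfolding t_def using bb by (simp add: mult.commute)
    moreover have "t * cnj b = complex_of_real ((cmod b)\<^sup>2 / ny\<^sup>2)"
      unfolding t_def using bb by simp
    moreover have "t * cnj t * cinner y y = complex_of_real ((cmod b)\<^sup>2 / ny\<^sup>2)"
      unfolding t_def yy using bb nyp by (simp add: field_simps power2_eq_square)
    ultimately show ?thesis unfolding xx by (simp add: algebra_simps)
  qed
  finally have "cinner z z = complex_of_real (nx\<^sup>2 - (cmod b)\<^sup>2 / ny\<^sup>2)" .
  moreover have "cinner z z = complex_of_real ((norm z)\<^sup>2)" by (rule cinner_self)
  ultimately have "complex_of_real ((norm z)\<^sup>2) = complex_of_real (nx\<^sup>2 - (cmod b)\<^sup>2 / ny\<^sup>2)" by simp
  then have "(norm z)\<^sup>2 = nx\<^sup>2 - (cmod b)\<^sup>2 / ny\<^sup>2" by (simp only: of_real_eq_iff)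
  then have "(cmod b)\<^sup>2 / ny\<^sup>2 \<le> nx\<^sup>2" by (smt (verit) zero_le_power2)
  then have "(cmod b)\<^sup>2 \<le> nx\<^sup>2 * ny\<^sup>2" using nyp by (simp add: divide_le_eq)
  then have "(cmod b)\<^sup>2 \<le> (nx * ny)\<^sup>2" by (simp add: power_mult_distrib)
  then have "cmod b \<le> nx * ny"
    by (rule power2_le_imp_le) (simp add: nx_def ny_def)
  then show ?thesis unfolding b_def nx_def ny_def .
qed


lemma AE_lift_fst:
  assumes sf: "sigma_finite_measure M" and ae: "AE x in M. P x"
  shows "AE z in M \<Otimes>\<^sub>M M. P (fst z)"
proof -
  obtain N where N: "N \<in> null_sets M" "{x\<in>space M. \<not> P x} \<subseteq> N"
    using ae by (auto elim: AE_E3 simp: eventually_ae_filter)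
  have Ns: "N \<in> sets M" and N0: "emeasure M N = 0" using N(1) by auto
  have "emeasure (M \<Otimes>\<^sub>M M) (N \<times> space M) = emeasure M N * emeasure M (space M)"
    using sigma_finite_measure.emeasure_pair_measure_Times[OF sf Ns sets.top] .
  then have "emeasure (M \<Otimes>\<^sub>M M) (N \<times> space M) = 0" using N0 by simp
  then have nn: "N \<times> space M \<in> null_sets (M \<Otimes>\<^sub>M M)" using Ns by auto
  show ?thesis
  proof (rule AE_I'[OF nn])
    show "{z \<in> space (M \<Otimes>\<^sub>M M). \<not> P (fst z)} \<subseteq> N \<times> space M"
      using N(2) by (auto simp: space_pair_measure)
  qed
qed

lemma AE_lift_snd:
  assumes sf: "sigma_finite_measure M" and ae: "AE x in M. P x"
  shows "AE z in M \<Otimes>\<^sub>M M. P (snd z)"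
proof -
  obtain N where N: "N \<in> null_sets M" "{x\<in>space M. \<not> P x} \<subseteq> N"
    using ae by (auto elim: AE_E3 simp: eventually_ae_filter)
  have Ns: "N \<in> sets M" and N0: "emeasure M N = 0" using N(1) by auto
  have "emeasure (M \<Otimes>\<^sub>M M) (space M \<times> N) = emeasure M (space M) * emeasure M N"
    using sigma_finite_measure.emeasure_pair_measure_Times[OF sf sets.top Ns] .
  then have "emeasure (M \<Otimes>\<^sub>M M) (space M \<times> N) = 0" using N0 by simp
  then have nn: "space M \<times> N \<in> null_sets (M \<Otimes>\<^sub>M M)" using Ns by auto
  show ?thesis
  proof (rule AE_I'[OF nn])
    show "{z \<in> space (M \<Otimes>\<^sub>M M). \<not> P (snd z)} \<subseteq> space M \<times> N"
      using N(2) by (auto simp: space_pair_measure)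
  qed
qed

lemma trunc_approx:
  fixes f :: "'a \<Rightarrow> 'h::chilbert"
  assumes "Linf_vec M f"
  shows "\<exists>g R. R > 0 \<and> (\<forall>n. simple_function M (g n)) \<and> (\<forall>n x. norm (g n x) \<le> R) \<and>
     (AE x in M. (\<lambda>n. g n x) \<longlonglongrightarrow> f x) \<and> (AE x in M. norm (f x) \<le> R)"
proof -
  obtain s where s: "\<forall>n. simple_function M (s n)" "AE x in M. (\<lambda>n. s n x) \<longlonglongrightarrow> f x"
    using assms unfolding Linf_vec_def strongly_measurable_def by blast
  obtain C where C: "AE x in M. norm (f x) \<le> C" using assms unfolding Linf_vec_def by blast
  define R where "R = \<bar>C\<bar> + 1"
  define g where "g n x = (if norm (s n x) \<le> R then s n x else 0)" for n x
  have "R > 0" unfolding R_def by simp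
  moreover have "\<forall>n. simple_function M (g n)"
  proof
    fix n
    have "g n = (\<lambda>v. if norm v \<le> R then v else 0) \<circ> s n" unfolding g_def by (auto simp: fun_eq_iff)
    then show "simple_function M (g n)" using s(1) by simp
  qed
  moreover have "\<forall>n x. norm (g n x) \<le> R" unfolding g_def using \<open>R > 0\<close> by auto
  moreover have "AE x in M. (\<lambda>n. g n x) \<longlonglongrightarrow> f x"
    using s(2) C
  proof eventually_elim
    fix x assume l: "(\<lambda>n. s n x) \<longlonglongrightarrow> f x" and b: "norm (f x) \<le> C"
    have "(\<lambda>n. norm (s n x)) \<longlonglongrightarrow> norm (f x)" using l by (rule tendsto_norm)
    moreover have "norm (f x) < R" using b unfolding R_def by simp
    ultimately have "eventually (\<lambda>n. norm (s n x) < R) sequentially" by (rule order_tendstoD(2))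
    then have "eventually (\<lambda>n. s n x = g n x) sequentially"
      by eventually_elim (simp add: g_def)
    then show "(\<lambda>n. g n x) \<longlonglongrightarrow> f x" by (rule Lim_transform_eventually[OF l])
  qed
  moreover have "AE x in M. norm (f x) \<le> R" using C by eventually_elim (simp add: R_def)
  ultimately show ?thesis by blast
qed

locale msetup =
  fixes M :: "'a measure" and \<phi> :: "'a \<Rightarrow> 'a \<Rightarrow> complex"
    and \<alpha> \<beta> :: "'a \<Rightarrow> 'h::chilbert" and W :: "'a op \<Rightarrow> 'a op"
    and aM bM :: "nat \<Rightarrow> 'a \<Rightarrow> 'h" and R Cp :: real
  assumes sf: "sigma_finite_measure M"
    and phim: "(\<lambda>z. \<phi> (fst z) (snd z)) \<in> borel_measurable (M \<Otimes>\<^sub>M M)"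
    and phib: "AE z in M \<Otimes>\<^sub>M M. cmod (\<phi> (fst z) (snd z)) \<le> Cp"
    and rep: "AE z in M \<Otimes>\<^sub>M M. \<phi> (fst z) (snd z) = cinner (\<alpha> (fst z)) (\<beta> (snd z))"
    and W: "schur_ext M \<phi> W"
    and Rp: "R > 0"
    and aS: "\<And>n. simple_function M (aM n)" and bS: "\<And>n. simple_function M (bM n)"
    and aB: "\<And>n x. norm (aM n x) \<le> R" and bB: "\<And>n x. norm (bM n x) \<le> R"
    and aL: "AE x in M. (\<lambda>n. aM n x) \<longlonglongrightarrow> \<alpha> x" and bL: "AE x in M. (\<lambda>n. bM n x) \<longlonglongrightarrow> \<beta> x"
    and \<alpha>B: "AE x in M. norm (\<alpha> x) \<le> R" and \<beta>B: "AE x in M. norm (\<beta> x) \<le> R"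
begin

definition eA :: "nat \<Rightarrow> 'a \<Rightarrow> real" where
  "eA m s = min (2 * R) \<bar>lim (\<lambda>k. norm (aM k s - aM m s))\<bar>"
definition eB :: "nat \<Rightarrow> 'a \<Rightarrow> real" where
  "eB m s = min (2 * R) \<bar>lim (\<lambda>k. norm (bM k s - bM m s))\<bar>"

lemma simple_meas2:
  assumes "simple_function M f" "simple_function M g"
  shows "(\<lambda>x. h (f x) (g x) :: 'c::topological_space) \<in> borel_measurable M"
proof -
  have "(\<lambda>x. h (f x) (g x)) = (\<lambda>p. h (fst p) (snd p)) \<circ> (\<lambda>x. (f x, g x))" by auto
  then have "simple_function M (\<lambda>x. h (f x) (g x))" using assms by simp
  then show ?thesis by (rule borel_measurable_simple_function)
qed

lemma simple_meas1:
  assumes "simple_function M f"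
  shows "(\<lambda>x. h (f x) :: 'c::topological_space) \<in> borel_measurable M"
proof -
  have "(\<lambda>x. h (f x)) = h \<circ> f" by auto
  then have "simple_function M (\<lambda>x. h (f x))" using assms by simp
  then show ?thesis by (rule borel_measurable_simple_function)
qed

lemma eA_meas[measurable]: "eA m \<in> borel_measurable M"
proof -
  have [measurable]: "\<And>k. (\<lambda>s. norm (aM k s - aM m s)) \<in> borel_measurable M"
    using simple_meas2[where h="\<lambda>u v. norm (u - v)", OF aS aS] by simp
  show ?thesis unfolding eA_def by measurable
qed

lemma eB_meas[measurable]: "eB m \<in> borel_measurable M"
proof -
  have [measurable]: "\<And>k. (\<lambda>s. norm (bM k s - bM m s)) \<in> borel_measurable M"
    using simple_meas2[where h="\<lambda>u v. norm (u - v)", OF bS bS] by simp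
  show ?thesis unfolding eB_def by measurable
qed

lemma eA_nonneg: "0 \<le> eA m s" and eA_le: "eA m s \<le> 2 * R"
  unfolding eA_def using Rp by auto
lemma eB_nonneg: "0 \<le> eB m s" and eB_le: "eB m s \<le> 2 * R"
  unfolding eB_def using Rp by auto

lemma eA_ae: "AE s in M. eA m s = norm (\<alpha> s - aM m s)"
  using aL \<alpha>B
proof eventually_elim
  fix s assume l: "(\<lambda>n. aM n s) \<longlonglongrightarrow> \<alpha> s" and b: "norm (\<alpha> s) \<le> R"
  have "(\<lambda>k. norm (aM k s - aM m s)) \<longlonglongrightarrow> norm (\<alpha> s - aM m s)"
    by (intro tendsto_norm tendsto_diff l tendsto_const)
  then have "lim (\<lambda>k. norm (aM k s - aM m s)) = norm (\<alpha> s - aM m s)" by (rule limI)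
  moreover have "norm (\<alpha> s - aM m s) \<le> 2 * R"
    using norm_triangle_ineq4[of "\<alpha> s" "aM m s"] b aB[of m s] by simp
  ultimately show "eA m s = norm (\<alpha> s - aM m s)" unfolding eA_def by simp
qed

lemma eB_ae: "AE s in M. eB m s = norm (\<beta> s - bM m s)"
  using bL \<beta>B
proof eventually_elim
  fix s assume l: "(\<lambda>n. bM n s) \<longlonglongrightarrow> \<beta> s" and b: "norm (\<beta> s) \<le> R"
  have "(\<lambda>k. norm (bM k s - bM m s)) \<longlonglongrightarrow> norm (\<beta> s - bM m s)"
    by (intro tendsto_norm tendsto_diff l tendsto_const)
  then have "lim (\<lambda>k. norm (bM k s - bM m s)) = norm (\<beta> s - bM m s)" by (rule limI)
  moreover have "norm (\<beta> s - bM m s) \<le> 2 * R"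
    using norm_triangle_ineq4[of "\<beta> s" "bM m s"] b bB[of m s] by simp
  ultimately show "eB m s = norm (\<beta> s - bM m s)" unfolding eB_def by simp
qed

lemma eA_lim: "AE s in M. (\<lambda>m. eA m s) \<longlonglongrightarrow> 0"
proof -
  have "AE s in M. \<forall>m. eA m s = norm (\<alpha> s - aM m s)" using eA_ae by (simp add: AE_all_countable)
  then show ?thesis using aL
  proof eventually_elim
    fix s assume e: "\<forall>m. eA m s = norm (\<alpha> s - aM m s)" and l: "(\<lambda>n. aM n s) \<longlonglongrightarrow> \<alpha> s"
    have "(\<lambda>m. norm (\<alpha> s - aM m s)) \<longlonglongrightarrow> norm (\<alpha> s - \<alpha> s)"
      by (intro tendsto_norm tendsto_diff l tendsto_const)
    then show "(\<lambda>m. eA m s) \<longlonglongrightarrow> 0" using e by simp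
  qed
qed

lemma eB_lim: "AE s in M. (\<lambda>m. eB m s) \<longlonglongrightarrow> 0"
proof -
  have "AE s in M. \<forall>m. eB m s = norm (\<beta> s - bM m s)" using eB_ae by (simp add: AE_all_countable)
  then show ?thesis using bL
  proof eventually_elim
    fix s assume e: "\<forall>m. eB m s = norm (\<beta> s - bM m s)" and l: "(\<lambda>n. bM n s) \<longlonglongrightarrow> \<beta> s"
    have "(\<lambda>m. norm (\<beta> s - bM m s)) \<longlonglongrightarrow> norm (\<beta> s - \<beta> s)"
      by (intro tendsto_norm tendsto_diff l tendsto_const)
    then show "(\<lambda>m. eB m s) \<longlonglongrightarrow> 0" using e by simp
  qed
qed

lemma bound_prod:
  "AE z in M \<Otimes>\<^sub>M M. cmod (\<phi> (fst z) (snd z) - cinner (aM m (fst z)) (bM m (snd z))) \<le> R * eA m (fst z) + R * eB m (snd z)"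
  using rep AE_lift_fst[OF sf eA_ae[of m]] AE_lift_snd[OF sf eB_ae[of m]] AE_lift_snd[OF sf \<beta>B]
proof eventually_elim
  fix z assume r: "\<phi> (fst z) (snd z) = cinner (\<alpha> (fst z)) (\<beta> (snd z))"
    and ea: "eA m (fst z) = norm (\<alpha> (fst z) - aM m (fst z))"
    and eb: "eB m (snd z) = norm (\<beta> (snd z) - bM m (snd z))"
    and b: "norm (\<beta> (snd z)) \<le> R"
  define a where "a = \<alpha> (fst z)" define a' where "a' = aM m (fst z)"
  define b' where "b' = \<beta> (snd z)" define b'' where "b'' = bM m (snd z)"
  have "cinner a b' - cinner a' b'' = cinner (a - a') b' + cinner a' (b' - b'')"
    by (simp add: cinner_diff_left cinner_diff_right)
  then have "cmod (cinner a b' - cinner a' b'') \<le> cmod (cinner (a - a') b') + cmod (cinner a' (b' - b''))"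
    by (simp add: norm_triangle_ineq)
  also have "\<dots> \<le> norm (a - a') * norm b' + norm a' * norm (b' - b'')"
    by (intro add_mono cinner_cs)
  also have "\<dots> \<le> norm (a - a') * R + R * norm (b' - b'')"
    using b aB[of m "fst z"] unfolding a'_def b'_def
    by (intro add_mono mult_left_mono mult_right_mono) auto
  finally show "cmod (\<phi> (fst z) (snd z) - cinner (aM m (fst z)) (bM m (snd z))) \<le> R * eA m (fst z) + R * eB m (snd z)"
    unfolding r ea eb a_def a'_def b'_def b''_def by (simp add: mult.commute)
qed

end


definition kPr :: "'a measure \<Rightarrow> 'a set set \<Rightarrow> 'a \<Rightarrow> 'a \<Rightarrow> real" where
  "kPr M P s t = (\<Sum>A\<in>P. (1 / measure M A) * (indicator A s * indicator A t))"

lemma of_real_indicator'[simp]: "complex_of_real (indicator A x) = indicator A x"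
  by (simp add: indicator_def)

lemma kP_real: "kP M P s t = complex_of_real (kPr M P s t)"
  unfolding kP_def kPr_def by simp

lemma kPr_nonneg: "0 \<le> kPr M P s t"
  unfolding kPr_def by (intro sum_nonneg) auto

lemma kP_int:
  assumes P: "adm M P" and u: "\<And>A. A \<in> P \<Longrightarrow> integrable M (\<lambda>t. indicator A t * u t)"
  shows "integrable M (\<lambda>t. kP M P s t * u t)"
proof -
  have "(\<lambda>t. kP M P s t * u t) = (\<lambda>t. \<Sum>A\<in>P. (indicator A s / complex_of_real (measure M A)) * (indicator A t * u t))"
    by (auto simp: kP_def sum_distrib_right intro!: sum.cong)
  then show ?thesis using u by simp
qed

lemma kPr_integral:
  assumes P: "adm M P" and w: "\<And>A. A \<in> P \<Longrightarrow> integrable M (\<lambda>t. indicator A t * w t)"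
  shows "integrable M (\<lambda>t. kPr M P s t * w t)"
    and "complex_of_real (LINT t|M. kPr M P s t * w t) = EP M P (\<lambda>t. complex_of_real (w t)) s"
proof -
  have wc: "integrable M (\<lambda>t. indicator A t * complex_of_real (w t))" if "A \<in> P" for A
  proof -
    have "integrable M (\<lambda>t. complex_of_real (indicator A t * w t))"
      using integrable_of_real[OF w[OF that]] .
    then show ?thesis by simp
  qed
  have eq: "(\<lambda>t. kP M P s t * complex_of_real (w t)) = (\<lambda>t. complex_of_real (kPr M P s t * w t))"
    by (simp add: kP_real)
  have "integrable M (\<lambda>t. kP M P s t * complex_of_real (w t))" by (rule kP_int[OF P wc])
  then have "integrable M (\<lambda>t. Re (complex_of_real (kPr M P s t * w t)))" unfolding eq by (rule integrable_Re)
  then show ir: "integrable M (\<lambda>t. kPr M P s t * w t)" by simp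
  have "complex_of_real (LINT t|M. kPr M P s t * w t) = (LINT t|M. kP M P s t * complex_of_real (w t))"
    unfolding eq by (rule integral_complex_of_real[symmetric])
  also have "\<dots> = EP M P (\<lambda>t. complex_of_real (w t)) s" by (rule kP_integral[OF P wc])
  finally show "complex_of_real (LINT t|M. kPr M P s t * w t) = EP M P (\<lambda>t. complex_of_real (w t)) s" .
qed

lemma l2norm_ofreal_norm: "l2norm M (\<lambda>t. complex_of_real (cmod (f t))) = l2norm M f"
  unfolding l2norm_def by simp

context msetup begin

definition Sa :: "nat \<Rightarrow> 'h \<Rightarrow> 'a set" where "Sa m a = aM m -` {a} \<inter> space M"
definition Tb :: "nat \<Rightarrow> 'h \<Rightarrow> 'a set" where "Tb m b = bM m -` {b} \<inter> space M"
definition Q :: "nat \<Rightarrow> ('h \<times> 'h) set" where "Q m = aM m ` space M \<times> bM m ` space M"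
definition cc :: "'h \<times> 'h \<Rightarrow> complex" where "cc p = cinner (fst p) (snd p)"
definition uu :: "nat \<Rightarrow> ('a \<Rightarrow> complex) \<Rightarrow> 'h \<Rightarrow> 'a \<Rightarrow> complex" where
  "uu m f b t = indicator (Tb m b) t * f t"
definition vv :: "nat \<Rightarrow> ('a \<Rightarrow> complex) \<Rightarrow> 'h \<Rightarrow> 'a \<Rightarrow> complex" where
  "vv m g a s = indicator (Sa m a) s * g s"
definition dm :: "nat \<Rightarrow> 'a \<Rightarrow> complex" where "dm m t = cinner (aM m t) (bM m t)"
definition DD :: "nat \<Rightarrow> ('a \<Rightarrow> complex) \<Rightarrow> ('a \<Rightarrow> complex) \<Rightarrow> complex" where
  "DD m f g = (LINT t|M. dm m t * f t * cnj (g t))"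
definition GG :: "nat \<Rightarrow> 'a set set \<Rightarrow> ('a \<Rightarrow> complex) \<Rightarrow> 'a \<Rightarrow> complex" where
  "GG m P f s = (\<Sum>p\<in>Q m. cc p * (indicator (Sa m (fst p)) s * EP M P (uu m f (snd p)) s))"
definition FF :: "'a set set \<Rightarrow> ('a \<Rightarrow> complex) \<Rightarrow> 'a \<Rightarrow> complex" where
  "FF P f s = (LINT t|M. \<phi> s t * kP M P s t * f t)"

lemma Q_fin: "finite (Q m)"
  unfolding Q_def using simple_functionD(1)[OF aS] simple_functionD(1)[OF bS] by simp

lemma Sa_sets[measurable]: "Sa m a \<in> sets M"
  unfolding Sa_def by (rule simple_functionD(2)[OF aS])
lemma Tb_sets[measurable]: "Tb m b \<in> sets M"
  unfolding Tb_def by (rule simple_functionD(2)[OF bS])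

lemma uu_L2: "f \<in> L2 M \<Longrightarrow> uu m f b \<in> L2 M"
  unfolding uu_def by (rule L2_bmult[where B=1]) (auto simp: indicator_def)
lemma vv_L2: "g \<in> L2 M \<Longrightarrow> vv m g a \<in> L2 M"
  unfolding vv_def by (rule L2_bmult[where B=1]) (auto simp: indicator_def)

lemma ind_pair:
  assumes "s \<in> space M" "t \<in> space M"
  shows "cinner (aM m s) (bM m t) = (\<Sum>p\<in>Q m. cc p * (indicator (Sa m (fst p)) s * indicator (Tb m (snd p)) t))"
proof -
  have "(\<Sum>p\<in>Q m. cc p * (indicator (Sa m (fst p)) s * indicator (Tb m (snd p)) t)) =
        (\<Sum>p\<in>Q m. if (aM m s, bM m t) = p then cc p else 0)"
    using assms by (intro sum.cong refl) (auto simp: Sa_def Tb_def indicator_def)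
  also have "\<dots> = cc (aM m s, bM m t)"
    using Q_fin[of m] assms by (simp add: Q_def)
  finally show ?thesis by (simp add: cc_def)
qed

lemma dm_bound: "cmod (dm m t) \<le> R * R"
  unfolding dm_def using cinner_cs[of "aM m t" "bM m t"] aB[of m t] bB[of m t]
  by (meson mult_mono norm_ge_zero order_trans)

lemma dm_meas[measurable]: "dm m \<in> borel_measurable M"
  unfolding dm_def using simple_meas2[where h=cinner, OF aS bS] .

lemma D_expand:
  assumes f: "f \<in> L2 M" and g: "g \<in> L2 M"
  shows "DD m f g = (\<Sum>p\<in>Q m. cc p * l2inner M (uu m f (snd p)) (vv m g (fst p)))"
proof -
  have "DD m f g = (LINT t|M. (\<Sum>p\<in>Q m. cc p * (uu m f (snd p) t * cnj (vv m g (fst p) t))))"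
    unfolding DD_def
  proof (intro Bochner_Integration.integral_cong refl)
    fix t assume t: "t \<in> space M"
    have "dm m t * f t * cnj (g t) = (\<Sum>p\<in>Q m. cc p * (indicator (Sa m (fst p)) t * indicator (Tb m (snd p)) t)) * (f t * cnj (g t))"
      unfolding dm_def ind_pair[OF t t] by simp
    also have "\<dots> = (\<Sum>p\<in>Q m. cc p * (uu m f (snd p) t * cnj (vv m g (fst p) t)))"
      unfolding sum_distrib_right uu_def vv_def
      by (intro sum.cong refl) (simp add: indicator_def)
    finally show "dm m t * f t * cnj (g t) = (\<Sum>p\<in>Q m. cc p * (uu m f (snd p) t * cnj (vv m g (fst p) t)))" .
  qed
  also have "\<dots> = (\<Sum>p\<in>Q m. LINT t|M. cc p * (uu m f (snd p) t * cnj (vv m g (fst p) t)))"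
    using L2_prod_int_cnj[OF uu_L2[OF f] vv_L2[OF g]]
    by (intro Bochner_Integration.integral_sum) auto
  also have "\<dots> = (\<Sum>p\<in>Q m. cc p * l2inner M (uu m f (snd p)) (vv m g (fst p)))"
    unfolding l2inner_def by simp
  finally show ?thesis .
qed

lemma GG_L2: "adm M P \<Longrightarrow> GG m P f \<in> L2 M"
  unfolding GG_def
  by (intro L2_sum[OF Q_fin] L2_cmult L2_bmult[where B=1] EP_L2) (auto simp: indicator_def)

lemma G_expand:
  assumes P: "adm M P" and g: "g \<in> L2 M"
  shows "l2inner M (GG m P f) g = (\<Sum>p\<in>Q m. cc p * l2inner M (EP M P (uu m f (snd p))) (vv m g (fst p)))"
proof -
  have "l2inner M (GG m P f) g = (LINT s|M. (\<Sum>p\<in>Q m. cc p * (EP M P (uu m f (snd p)) s * cnj (vv m g (fst p) s))))"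
    unfolding l2inner_def GG_def sum_distrib_right
    by (intro Bochner_Integration.integral_cong refl sum.cong) (simp add: vv_def indicator_def)
  also have "\<dots> = (\<Sum>p\<in>Q m. LINT s|M. cc p * (EP M P (uu m f (snd p)) s * cnj (vv m g (fst p) s)))"
    using L2_prod_int_cnj[OF EP_L2[OF P] vv_L2[OF g]]
    by (intro Bochner_Integration.integral_sum) auto
  also have "\<dots> = (\<Sum>p\<in>Q m. cc p * l2inner M (EP M P (uu m f (snd p))) (vv m g (fst p)))"
    unfolding l2inner_def by simp
  finally show ?thesis .
qed

lemma term3:
  assumes P: "adm M P" and f: "f \<in> L2 M" and g: "g \<in> L2 M"
  shows "cmod (l2inner M (GG m P f) g - DD m f g) \<le>
    (\<Sum>p\<in>Q m. cmod (cc p) * (l2norm M (\<lambda>x. EP M P (uu m f (snd p)) x - uu m f (snd p) x) * l2norm M (vv m g (fst p))))"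
proof -
  have "l2inner M (GG m P f) g - DD m f g =
     (\<Sum>p\<in>Q m. cc p * l2inner M (\<lambda>x. EP M P (uu m f (snd p)) x - uu m f (snd p) x) (vv m g (fst p)))"
    unfolding G_expand[OF P g] D_expand[OF f g] sum_subtractf[symmetric]
    using l2inner_diff_left[OF EP_L2[OF P] uu_L2[OF f] vv_L2[OF g]]
    by (intro sum.cong refl) (simp add: right_diff_distrib)
  also have "cmod \<dots> \<le> (\<Sum>p\<in>Q m. cmod (cc p * l2inner M (\<lambda>x. EP M P (uu m f (snd p)) x - uu m f (snd p) x) (vv m g (fst p))))"
    by (rule norm_sum)
  also have "\<dots> \<le> (\<Sum>p\<in>Q m. cmod (cc p) * (l2norm M (\<lambda>x. EP M P (uu m f (snd p)) x - uu m f (snd p) x) * l2norm M (vv m g (fst p))))"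
    unfolding norm_mult
    by (intro sum_mono mult_left_mono L2_cs L2_diff EP_L2[OF P] uu_L2[OF f] vv_L2[OF g]) auto
  finally show ?thesis .
qed

end


context msetup begin

lemma PS: "pair_sigma_finite M M" using sf by (simp add: pair_sigma_finite_def)

lemma phi_s_meas: "s \<in> space M \<Longrightarrow> (\<lambda>t. \<phi> s t) \<in> borel_measurable M"
  using measurable_Pair2[OF phim, of s] by simp

lemma eBf_L2: "f \<in> L2 M \<Longrightarrow> (\<lambda>t. complex_of_real (eB m t) * f t) \<in> L2 M"
  by (rule L2_bmult[where B="2*R"]) (auto simp: eB_nonneg eB_le)
lemma eAg_L2: "g \<in> L2 M \<Longrightarrow> (\<lambda>t. complex_of_real (eA m t) * g t) \<in> L2 M"
  by (rule L2_bmult[where B="2*R"]) (auto simp: eA_nonneg eA_le)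

lemma FG_pointwise:
  assumes P: "adm M P" and f: "f \<in> L2 M"
  shows "AE s in M. cmod (FF P f s - GG m P f s) \<le>
    R * eA m s * cmod (EP M P (\<lambda>t. complex_of_real (cmod (f t))) s) +
    R * cmod (EP M P (\<lambda>t. complex_of_real (eB m t * cmod (f t))) s)"
proof -
  have ae1: "AE s in M. AE t in M. cmod (\<phi> s t - cinner (aM m s) (bM m t)) \<le> R * eA m s + R * eB m t"
    using pair_sigma_finite.AE_pair[OF PS bound_prod[of m]] by simp
  have ae2: "AE s in M. AE t in M. cmod (\<phi> s t) \<le> Cp"
    using pair_sigma_finite.AE_pair[OF PS phib] by simp
  have fm[measurable]: "f \<in> borel_measurable M" using f by (simp add: L2_def)
  show ?thesis using ae1 ae2 AE_space
  proof eventually_elim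
    fix s assume b1: "AE t in M. cmod (\<phi> s t - cinner (aM m s) (bM m t)) \<le> R * eA m s + R * eB m t"
      and b2: "AE t in M. cmod (\<phi> s t) \<le> Cp" and s: "s \<in> space M"
    have int_kf: "integrable M (\<lambda>t. kP M P s t * f t)" by (rule kP_int[OF P adm_ind_int[OF P _ f]])
    have kfm: "(\<lambda>t. kP M P s t * f t) \<in> borel_measurable M" using int_kf by auto
    have int1: "integrable M (\<lambda>t. \<phi> s t * kP M P s t * f t)"
    proof (rule Bochner_Integration.integrable_bound[where f="\<lambda>t. \<bar>Cp\<bar> * cmod (kP M P s t * f t)"])
      show "integrable M (\<lambda>t. \<bar>Cp\<bar> * cmod (kP M P s t * f t))" using int_kf by simp
      show "(\<lambda>t. \<phi> s t * kP M P s t * f t) \<in> borel_measurable M"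
        using borel_measurable_times[OF phi_s_meas[OF s] kfm] by (simp add: mult.assoc)
      show "AE t in M. norm (\<phi> s t * kP M P s t * f t) \<le> norm (\<bar>Cp\<bar> * cmod (kP M P s t * f t))"
        using b2 by eventually_elim (auto simp: norm_mult mult.assoc intro!: mult_right_mono)
    qed
    have cim: "(\<lambda>t. cinner (aM m s) (bM m t)) \<in> borel_measurable M"
      using simple_meas1[where h="\<lambda>v. cinner (aM m s) v", OF bS] .
    have int2: "integrable M (\<lambda>t. cinner (aM m s) (bM m t) * kP M P s t * f t)"
    proof (rule Bochner_Integration.integrable_bound[where f="\<lambda>t. (R * R) * cmod (kP M P s t * f t)"])
      show "integrable M (\<lambda>t. (R * R) * cmod (kP M P s t * f t))" using int_kf by simp
      show "(\<lambda>t. cinner (aM m s) (bM m t) * kP M P s t * f t) \<in> borel_measurable M"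
        using borel_measurable_times[OF cim kfm] by (simp add: mult.assoc)
      show "AE t in M. norm (cinner (aM m s) (bM m t) * kP M P s t * f t) \<le> norm ((R * R) * cmod (kP M P s t * f t))"
      proof (rule AE_I2)
        fix t
        have "cmod (cinner (aM m s) (bM m t)) \<le> R * R"
          using cinner_cs[of "aM m s" "bM m t"] aB[of m s] bB[of m t]
          by (meson mult_mono norm_ge_zero order_trans)
        then have "cmod (cinner (aM m s) (bM m t)) * (cmod (kP M P s t) * cmod (f t)) \<le> (R * R) * (cmod (kP M P s t) * cmod (f t))"
          by (rule mult_right_mono) simp
        then show "norm (cinner (aM m s) (bM m t) * kP M P s t * f t) \<le> norm ((R * R) * cmod (kP M P s t * f t))"
          using Rp by (simp add: norm_mult mult.assoc)
      qed
    qed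
    have Geq: "GG m P f s = (LINT t|M. cinner (aM m s) (bM m t) * kP M P s t * f t)"
    proof -
      have "(LINT t|M. cinner (aM m s) (bM m t) * kP M P s t * f t) =
            (LINT t|M. (\<Sum>p\<in>Q m. (cc p * indicator (Sa m (fst p)) s) * (kP M P s t * uu m f (snd p) t)))"
      proof (intro Bochner_Integration.integral_cong refl)
        fix t assume t: "t \<in> space M"
        show "cinner (aM m s) (bM m t) * kP M P s t * f t =
              (\<Sum>p\<in>Q m. (cc p * indicator (Sa m (fst p)) s) * (kP M P s t * uu m f (snd p) t))"
          unfolding ind_pair[OF s t] sum_distrib_right uu_def
          by (intro sum.cong refl) (simp add: mult_ac)
      qed
      also have "\<dots> = (\<Sum>p\<in>Q m. (cc p * indicator (Sa m (fst p)) s) * (LINT t|M. kP M P s t * uu m f (snd p) t))"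
        using kP_int[OF P adm_ind_int[OF P _ uu_L2[OF f]]]
        by (subst Bochner_Integration.integral_sum) auto
      also have "\<dots> = GG m P f s"
        unfolding GG_def using kP_integral[OF P adm_ind_int[OF P _ uu_L2[OF f]]]
        by (intro sum.cong refl) (simp add: mult_ac)
      finally show ?thesis by simp
    qed
    have f1: "integrable M (\<lambda>t. complex_of_real (cmod (f t)))" if "False" using that by simp
    have w1: "\<And>A. A \<in> P \<Longrightarrow> integrable M (\<lambda>t. indicator A t * cmod (f t))"
      using L2_prod_norm_int[OF adm_ind_L2[OF P] f] by simp
    have w2: "\<And>A. A \<in> P \<Longrightarrow> integrable M (\<lambda>t. indicator A t * (eB m t * cmod (f t)))"
    proof -
      fix A assume A: "A \<in> P"
      have "integrable M (\<lambda>t. cmod (indicator A t :: complex) * cmod (complex_of_real (eB m t) * f t))"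
        by (rule L2_prod_norm_int[OF adm_ind_L2[OF P A] eBf_L2[OF f]])
      then show "integrable M (\<lambda>t. indicator A t * (eB m t * cmod (f t)))"
        by (simp add: norm_mult eB_nonneg)
    qed
    have "FF P f s - GG m P f s = (LINT t|M. \<phi> s t * kP M P s t * f t - cinner (aM m s) (bM m t) * kP M P s t * f t)"
      unfolding FF_def Geq using int1 int2 by simp
    also have "\<dots> = (LINT t|M. (\<phi> s t - cinner (aM m s) (bM m t)) * kP M P s t * f t)"
      by (simp add: algebra_simps)
    finally have eq: "FF P f s - GG m P f s = (LINT t|M. (\<phi> s t - cinner (aM m s) (bM m t)) * kP M P s t * f t)" .
    have intd: "integrable M (\<lambda>t. (\<phi> s t - cinner (aM m s) (bM m t)) * kP M P s t * f t)"
      using Bochner_Integration.integrable_diff[OF int1 int2] by (simp add: algebra_simps)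
    have intr1: "integrable M (\<lambda>t. kPr M P s t * cmod (f t))" using kPr_integral(1)[OF P w1] .
    have intr2: "integrable M (\<lambda>t. kPr M P s t * (eB m t * cmod (f t)))" using kPr_integral(1)[OF P w2] .
    have "cmod (FF P f s - GG m P f s) \<le> (LINT t|M. cmod ((\<phi> s t - cinner (aM m s) (bM m t)) * kP M P s t * f t))"
      unfolding eq by (rule integral_norm_bound)
    also have "\<dots> \<le> (LINT t|M. R * eA m s * (kPr M P s t * cmod (f t)) + R * (kPr M P s t * (eB m t * cmod (f t))))"
    proof (rule integral_mono_AE)
      show "integrable M (\<lambda>t. cmod ((\<phi> s t - cinner (aM m s) (bM m t)) * kP M P s t * f t))"
        using intd by simp
      show "integrable M (\<lambda>t. R * eA m s * (kPr M P s t * cmod (f t)) + R * (kPr M P s t * (eB m t * cmod (f t))))"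
        using intr1 intr2 by simp
      show "AE t in M. cmod ((\<phi> s t - cinner (aM m s) (bM m t)) * kP M P s t * f t)
          \<le> R * eA m s * (kPr M P s t * cmod (f t)) + R * (kPr M P s t * (eB m t * cmod (f t)))"
        using b1
      proof eventually_elim
        fix t assume bt: "cmod (\<phi> s t - cinner (aM m s) (bM m t)) \<le> R * eA m s + R * eB m t"
        have "cmod ((\<phi> s t - cinner (aM m s) (bM m t)) * kP M P s t * f t) =
              cmod (\<phi> s t - cinner (aM m s) (bM m t)) * (kPr M P s t * cmod (f t))"
          by (simp add: norm_mult kP_real kPr_nonneg)
        also have "\<dots> \<le> (R * eA m s + R * eB m t) * (kPr M P s t * cmod (f t))"
          using bt by (intro mult_right_mono) (auto simp: kPr_nonneg)
        also have "\<dots> = R * eA m s * (kPr M P s t * cmod (f t)) + R * (kPr M P s t * (eB m t * cmod (f t)))"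
          by (simp add: algebra_simps)
        finally show "cmod ((\<phi> s t - cinner (aM m s) (bM m t)) * kP M P s t * f t)
          \<le> R * eA m s * (kPr M P s t * cmod (f t)) + R * (kPr M P s t * (eB m t * cmod (f t)))" .
      qed
    qed
    also have "\<dots> = R * eA m s * (LINT t|M. kPr M P s t * cmod (f t)) + R * (LINT t|M. kPr M P s t * (eB m t * cmod (f t)))"
      using intr1 intr2 by simp
    also have "\<dots> \<le> R * eA m s * cmod (EP M P (\<lambda>t. complex_of_real (cmod (f t))) s) +
        R * cmod (EP M P (\<lambda>t. complex_of_real (eB m t * cmod (f t))) s)"
    proof (intro add_mono mult_left_mono)
      have e1: "complex_of_real (LINT t|M. kPr M P s t * cmod (f t)) = EP M P (\<lambda>t. complex_of_real (cmod (f t))) s"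
        by (rule kPr_integral(2)[OF P w1])
      then show "(LINT t|M. kPr M P s t * cmod (f t)) \<le> cmod (EP M P (\<lambda>t. complex_of_real (cmod (f t))) s)"
        unfolding e1[symmetric] by simp
      have e2: "complex_of_real (LINT t|M. kPr M P s t * (eB m t * cmod (f t))) = EP M P (\<lambda>t. complex_of_real (eB m t * cmod (f t))) s"
        by (rule kPr_integral(2)[OF P w2])
      then show "(LINT t|M. kPr M P s t * (eB m t * cmod (f t))) \<le> cmod (EP M P (\<lambda>t. complex_of_real (eB m t * cmod (f t))) s)"
        unfolding e2[symmetric] by simp
      show "0 \<le> R * eA m s" using Rp eA_nonneg by simp
      show "0 \<le> R" using Rp by simp
    qed
    finally show "cmod (FF P f s - GG m P f s) \<le>
      R * eA m s * cmod (EP M P (\<lambda>t. complex_of_real (cmod (f t))) s) +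
      R * cmod (EP M P (\<lambda>t. complex_of_real (eB m t * cmod (f t))) s)" .
  qed
qed

end


lemma l2norm_zero[simp]: "l2norm M (\<lambda>x. 0) = 0" by (simp add: l2norm_def)

lemma bounded_id: "bounded_op M (\<lambda>h. h)"
  unfolding bounded_op_def op_bound_def by (auto intro!: exI[of _ 1])

lemma l2norm_diff_le:
  assumes "f \<in> L2 M" "g \<in> L2 M"
  shows "l2norm M (\<lambda>x. f x - g x) \<le> l2norm M f + l2norm M g"
proof -
  have "l2norm M (\<lambda>x. f x - g x) = l2norm M (\<lambda>x. f x + (-1) * g x)" by simp
  also have "\<dots> \<le> l2norm M f + l2norm M (\<lambda>x. (-1) * g x)"
    by (rule l2norm_triangle[OF assms(1) L2_cmult[OF assms(2)]])
  also have "l2norm M (\<lambda>x. (-1) * g x) = l2norm M g" using l2norm_cmult[of M "-1" g] by simp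
  finally show ?thesis .
qed

context msetup begin

definition eAg :: "nat \<Rightarrow> ('a \<Rightarrow> complex) \<Rightarrow> 'a \<Rightarrow> complex" where
  "eAg m g s = complex_of_real (eA m s) * g s"
definition eBf :: "nat \<Rightarrow> ('a \<Rightarrow> complex) \<Rightarrow> 'a \<Rightarrow> complex" where
  "eBf m f s = complex_of_real (eB m s) * f s"

lemma FF_meas:
  assumes P: "adm M P" and f: "f \<in> L2 M"
  shows "FF P f \<in> borel_measurable M"
proof -
  have fm[measurable]: "f \<in> borel_measurable M" using f by (simp add: L2_def)
  have k: "(\<lambda>z. kP M P (fst z) (snd z)) \<in> borel_measurable (M \<Otimes>\<^sub>M M)"
    using kP_L2_kernel[OF sf P] unfolding L2_kernel_def by auto
  have fs: "(\<lambda>z. f (snd z)) \<in> borel_measurable (M \<Otimes>\<^sub>M M)" by measurable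
  have "(\<lambda>z. \<phi> (fst z) (snd z) * kP M P (fst z) (snd z) * f (snd z)) \<in> borel_measurable (M \<Otimes>\<^sub>M M)"
    using borel_measurable_times[OF borel_measurable_times[OF phim k] fs] .
  then have "case_prod (\<lambda>s t. \<phi> s t * kP M P s t * f t) \<in> borel_measurable (M \<Otimes>\<^sub>M M)"
    by (simp add: case_prod_beta')
  then show ?thesis
    unfolding FF_def[abs_def] by (rule sigma_finite_measure.borel_measurable_lebesgue_integral[OF sf])
qed

lemma FG_l2:
  assumes P: "adm M P" and f: "f \<in> L2 M" and g: "g \<in> L2 M"
  shows "integrable M (\<lambda>s. FF P f s * cnj (g s))"
    and "cmod (l2inner M (FF P f) g - l2inner M (GG m P f) g) \<le>
       R * (l2norm M f * l2norm M (eAg m g)) + R * (l2norm M (eBf m f) * l2norm M g)"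
proof -
  define E1 where "E1 = EP M P (\<lambda>t. complex_of_real (cmod (f t)))"
  define E2 where "E2 = EP M P (\<lambda>t. complex_of_real (eB m t * cmod (f t)))"
  have E1: "E1 \<in> L2 M" unfolding E1_def by (rule EP_L2[OF P])
  have E2: "E2 \<in> L2 M" unfolding E2_def by (rule EP_L2[OF P])
  have eAgL: "eAg m g \<in> L2 M" unfolding eAg_def by (rule eAg_L2[OF g])
  have eBfL: "eBf m f \<in> L2 M" unfolding eBf_def by (rule eBf_L2[OF f])
  have G: "GG m P f \<in> L2 M" by (rule GG_L2[OF P])
  have gm[measurable]: "g \<in> borel_measurable M" using g by (simp add: L2_def)
  have Fm[measurable]: "FF P f \<in> borel_measurable M" by (rule FF_meas[OF P f])
  have ceAg: "cmod (eAg m g s) = eA m s * cmod (g s)" for s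
    unfolding eAg_def by (simp add: norm_mult eA_nonneg)
  have pw: "AE s in M. cmod (FF P f s - GG m P f s) * cmod (g s) \<le>
      R * (cmod (E1 s) * cmod (eAg m g s)) + R * (cmod (E2 s) * cmod (g s))"
    using FG_pointwise[OF P f, of m]
  proof eventually_elim
    fix s assume b: "cmod (FF P f s - GG m P f s) \<le> R * eA m s * cmod (EP M P (\<lambda>t. complex_of_real (cmod (f t))) s) +
      R * cmod (EP M P (\<lambda>t. complex_of_real (eB m t * cmod (f t))) s)"
    have "cmod (FF P f s - GG m P f s) * cmod (g s) \<le> (R * eA m s * cmod (E1 s) + R * cmod (E2 s)) * cmod (g s)"
      using b unfolding E1_def E2_def by (intro mult_right_mono) auto
    also have "\<dots> = R * (cmod (E1 s) * cmod (eAg m g s)) + R * (cmod (E2 s) * cmod (g s))"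
      unfolding ceAg by (simp add: algebra_simps)
    finally show "cmod (FF P f s - GG m P f s) * cmod (g s) \<le> R * (cmod (E1 s) * cmod (eAg m g s)) + R * (cmod (E2 s) * cmod (g s))" .
  qed
  have i1: "integrable M (\<lambda>s. cmod (E1 s) * cmod (eAg m g s))" by (rule L2_prod_norm_int[OF E1 eAgL])
  have i2: "integrable M (\<lambda>s. cmod (E2 s) * cmod (g s))" by (rule L2_prod_norm_int[OF E2 g])
  have i3: "integrable M (\<lambda>s. cmod (GG m P f s) * cmod (g s))" by (rule L2_prod_norm_int[OF G g])
  show Fint: "integrable M (\<lambda>s. FF P f s * cnj (g s))"
  proof (rule Bochner_Integration.integrable_bound[where f="\<lambda>s. cmod (GG m P f s) * cmod (g s) +
      (R * (cmod (E1 s) * cmod (eAg m g s)) + R * (cmod (E2 s) * cmod (g s)))"])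
    show "integrable M (\<lambda>s. cmod (GG m P f s) * cmod (g s) +
      (R * (cmod (E1 s) * cmod (eAg m g s)) + R * (cmod (E2 s) * cmod (g s))))"
      using i1 i2 i3 by simp
    show "(\<lambda>s. FF P f s * cnj (g s)) \<in> borel_measurable M" by measurable
    show "AE s in M. norm (FF P f s * cnj (g s)) \<le> norm (cmod (GG m P f s) * cmod (g s) +
      (R * (cmod (E1 s) * cmod (eAg m g s)) + R * (cmod (E2 s) * cmod (g s))))"
      using pw
    proof eventually_elim
      fix s assume b: "cmod (FF P f s - GG m P f s) * cmod (g s) \<le> R * (cmod (E1 s) * cmod (eAg m g s)) + R * (cmod (E2 s) * cmod (g s))"
      have "cmod (FF P f s) \<le> cmod (GG m P f s) + cmod (FF P f s - GG m P f s)"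
        using norm_triangle_ineq[of "GG m P f s" "FF P f s - GG m P f s"] by simp
      then have "cmod (FF P f s) * cmod (g s) \<le> (cmod (GG m P f s) + cmod (FF P f s - GG m P f s)) * cmod (g s)"
        by (intro mult_right_mono) auto
      also have "\<dots> \<le> cmod (GG m P f s) * cmod (g s) + (R * (cmod (E1 s) * cmod (eAg m g s)) + R * (cmod (E2 s) * cmod (g s)))"
        using b by (simp add: distrib_right)
      also have "\<dots> \<le> norm (cmod (GG m P f s) * cmod (g s) + (R * (cmod (E1 s) * cmod (eAg m g s)) + R * (cmod (E2 s) * cmod (g s))))"
        by simp
      finally show "norm (FF P f s * cnj (g s)) \<le> norm (cmod (GG m P f s) * cmod (g s) +
        (R * (cmod (E1 s) * cmod (eAg m g s)) + R * (cmod (E2 s) * cmod (g s))))"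
        by (simp add: norm_mult)
    qed
  qed
  have Gint: "integrable M (\<lambda>s. GG m P f s * cnj (g s))" by (rule L2_prod_int_cnj[OF G g])
  have "l2inner M (FF P f) g - l2inner M (GG m P f) g = (LINT s|M. (FF P f s - GG m P f s) * cnj (g s))"
    unfolding l2inner_def using Fint Gint by (simp add: left_diff_distrib)
  also have "cmod \<dots> \<le> (LINT s|M. cmod ((FF P f s - GG m P f s) * cnj (g s)))"
    by (rule integral_norm_bound)
  also have "\<dots> \<le> (LINT s|M. R * (cmod (E1 s) * cmod (eAg m g s)) + R * (cmod (E2 s) * cmod (g s)))"
  proof (rule integral_mono_AE)
    show "integrable M (\<lambda>s. cmod ((FF P f s - GG m P f s) * cnj (g s)))"
      using Bochner_Integration.integrable_diff[OF Fint Gint] by (simp add: left_diff_distrib)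
    show "integrable M (\<lambda>s. R * (cmod (E1 s) * cmod (eAg m g s)) + R * (cmod (E2 s) * cmod (g s)))"
      using i1 i2 by simp
    show "AE s in M. cmod ((FF P f s - GG m P f s) * cnj (g s)) \<le> R * (cmod (E1 s) * cmod (eAg m g s)) + R * (cmod (E2 s) * cmod (g s))"
      using pw by eventually_elim (simp add: norm_mult)
  qed
  also have "\<dots> = R * (LINT s|M. cmod (E1 s) * cmod (eAg m g s)) + R * (LINT s|M. cmod (E2 s) * cmod (g s))"
    using i1 i2 by simp
  also have "\<dots> \<le> R * (l2norm M E1 * l2norm M (eAg m g)) + R * (l2norm M E2 * l2norm M g)"
    using Rp by (intro add_mono mult_left_mono L2_cs_real E1 E2 eAgL g) auto
  also have "\<dots> \<le> R * (l2norm M f * l2norm M (eAg m g)) + R * (l2norm M (eBf m f) * l2norm M g)"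
  proof (intro add_mono mult_left_mono mult_right_mono)
    show "l2norm M E1 \<le> l2norm M f"
      using EP_contract[OF P L2_norm[OF f]] unfolding E1_def l2norm_ofreal_norm .
    have "l2norm M (\<lambda>t. complex_of_real (eB m t * cmod (f t))) = l2norm M (eBf m f)"
      unfolding l2norm_def eBf_def by (simp add: norm_mult eB_nonneg)
    moreover have "(\<lambda>t. complex_of_real (eB m t * cmod (f t))) \<in> L2 M"
      using L2_norm[OF eBfL] unfolding eBf_def by (simp add: norm_mult eB_nonneg)
    ultimately show "l2norm M E2 \<le> l2norm M (eBf m f)"
      using EP_contract[OF P] unfolding E2_def by metis
  qed (use Rp in \<open>auto simp: l2norm_nonneg\<close>)
  finally show "cmod (l2inner M (FF P f) g - l2inner M (GG m P f) g) \<le>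
       R * (l2norm M f * l2norm M (eAg m g)) + R * (l2norm M (eBf m f) * l2norm M g)" .
qed

end


lemma nf_single:
  "normal_fun M (\<lambda>n. if n = 0 then f else (\<lambda>_. 0)) (\<lambda>n. if n = 0 then g else (\<lambda>_. 0)) T = l2inner M (T f) g"
proof -
  have e: "(\<lambda>n. l2inner M (T (if n = 0 then f else (\<lambda>_. 0))) (if n = 0 then g else (\<lambda>_. 0))) =
      (\<lambda>n. if n = 0 then l2inner M (T f) g else 0)"
    by (auto simp: fun_eq_iff l2inner_zero_right)
  have "(\<lambda>n. if n = 0 then l2inner M (T f) g else 0) sums l2inner M (T f) g"
    using sums_single[of 0 "\<lambda>_. l2inner M (T f) g"] by simp
  then show ?thesis unfolding normal_fun_def e by (rule sums_unique[symmetric])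
qed

lemma ns_single:
  assumes "f \<in> L2 M" "g \<in> L2 M"
  shows "normal_seq M (\<lambda>n. if n = 0 then f else (\<lambda>_. 0)) (\<lambda>n. if n = 0 then g else (\<lambda>_. 0))"
  unfolding normal_seq_def using assms L2_zero
  by (auto intro!: summable_finite[of "{0}"] split: if_splits)

context msetup begin

lemma W1: "bounded_op M T \<Longrightarrow> bounded_op M (W T)" using W unfolding schur_ext_def by blast
lemma W4: "L2_kernel M k \<Longrightarrow> op_eq M (W (hs_op M k)) (hs_op M (\<lambda>s t. \<phi> s t * k s t))"
  using W unfolding schur_ext_def by blast
lemma W5: "wstar_continuous M W" using W unfolding schur_ext_def by blast

lemma main_bound:
  assumes f: "f \<in> L2 M" and g: "g \<in> L2 M"
  shows "cmod (l2inner M (W (\<lambda>h. h) f) g - DD m f g) \<le>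
    R * (l2norm M f * l2norm M (eAg m g)) + R * (l2norm M (eBf m f) * l2norm M g)"
proof -
  define x where "x = (\<lambda>n::nat. if n = 0 then f else (\<lambda>_. 0))"
  define y where "y = (\<lambda>n::nat. if n = 0 then g else (\<lambda>_. 0))"
  have nsxy: "normal_seq M x y" unfolding x_def y_def by (rule ns_single[OF f g])
  obtain x' y' where ns': "normal_seq M x' y'"
    and eqT: "\<And>T. bounded_op M T \<Longrightarrow> normal_fun M x y (W T) = normal_fun M x' y' T"
    using W5 nsxy unfolding wstar_continuous_def by blast
  have x'L: "\<And>n. x' n \<in> L2 M" and y'L: "\<And>n. y' n \<in> L2 M"
    and Ssum: "summable (\<lambda>n. l2norm M (x' n) * l2norm M (y' n))"
    using ns' unfolding normal_seq_def by auto
  have nfxy: "normal_fun M x y T = l2inner M (T f) g" for T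
    unfolding x_def y_def by (rule nf_single)
  define L where "L = l2inner M (W (\<lambda>h. h) f) g"
  have L_eq: "L = (\<Sum>n. l2inner M (x' n) (y' n))"
    using eqT[OF bounded_id] unfolding L_def nfxy by (simp add: normal_fun_def)
  define B where "B = R * (l2norm M f * l2norm M (eAg m g)) + R * (l2norm M (eBf m f) * l2norm M g)"
  have gm: "g \<in> borel_measurable M" using g by (simp add: L2_def)
  have "cmod (L - DD m f g) \<le> B"
  proof (rule field_le_epsilon)
    fix \<delta> :: real assume \<delta>: "\<delta> > 0"
    define S where "S n = l2norm M (x' n) * l2norm M (y' n)" for n
    have S0: "0 \<le> S n" for n unfolding S_def by (simp add: l2norm_nonneg)
    have Ssum': "summable S" using Ssum unfolding S_def .
    obtain N where N: "norm (\<Sum>i. S (i + N)) < \<delta> / 8"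
      using suminf_exist_split[OF _ Ssum', of "\<delta>/8"] \<delta> by auto
    define Y where "Y = (\<Sum>n<N. l2norm M (y' n))"
    define K where "K = (\<Sum>p\<in>Q m. cmod (cc p) * l2norm M (vv m g (fst p)))"
    have Y0: "Y \<ge> 0" unfolding Y_def by (intro sum_nonneg) (simp add: l2norm_nonneg)
    have K0: "K \<ge> 0" unfolding K_def by (intro sum_nonneg) (simp add: l2norm_nonneg)
    define \<eta> where "\<eta> = \<delta> / (4 * (Y + K + 1))"
    have \<eta>p: "\<eta> > 0" unfolding \<eta>_def using \<delta> Y0 K0 by simp
    have Dn: "Y + K + 1 \<noteq> 0" using Y0 K0 by simp
    have \<eta>tot: "\<eta> * (Y + K + 1) = \<delta> / 4" unfolding \<eta>_def using Dn by (simp add: field_simps)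
    have \<eta>Y: "\<eta> * Y \<le> \<delta> / 4"
    proof -
      have "\<eta> * Y \<le> \<eta> * (Y + K + 1)" using \<eta>p K0 by (intro mult_left_mono) auto
      then show ?thesis using \<eta>tot by simp
    qed
    have \<eta>K: "\<eta> * K \<le> \<delta> / 4"
    proof -
      have "\<eta> * K \<le> \<eta> * (Y + K + 1)" using \<eta>p Y0 by (intro mult_left_mono) auto
      then show ?thesis using \<eta>tot by simp
    qed
    define Z where "Z = x' ` {..<N} \<union> (\<lambda>p. uu m f (snd p)) ` Q m"
    have finZ: "finite Z" unfolding Z_def using Q_fin by simp
    have ZL: "Z \<subseteq> L2 M" unfolding Z_def using x'L uu_L2[OF f] by auto
    obtain P where P: "adm M P" and Pz: "\<forall>z\<in>Z. l2norm M (\<lambda>x. EP M P z x - z x) \<le> \<eta>"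
      using approx_EP[OF finZ ZL \<eta>p] by blast
    define T where "T = hs_op M (kP M P)"
    have Tb: "bounded_op M T" unfolding T_def by (rule kP_bounded[OF P])
    have WTfL: "W T f \<in> L2 M" using W1[OF Tb] f unfolding bounded_op_def by blast
    have Tx: "T (x' n) = EP M P (x' n)" for n
      unfolding T_def using hs_op_kP[OF P x'L[of n]] by auto
    have e1: "l2inner M (W T f) g = (\<Sum>n. l2inner M (EP M P (x' n)) (y' n))"
      using eqT[OF Tb] unfolding nfxy by (simp add: normal_fun_def Tx)
    have e2: "l2inner M (W T f) g = l2inner M (FF P f) g"
    proof -
      have "op_eq M (W T) (hs_op M (\<lambda>s t. \<phi> s t * kP M P s t))"
        unfolding T_def by (rule W4[OF kP_L2_kernel[OF sf P]])
      then have ae: "AE s in M. W T f s = hs_op M (\<lambda>s t. \<phi> s t * kP M P s t) f s"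
        using f unfolding op_eq_def by blast
      have hf: "hs_op M (\<lambda>s t. \<phi> s t * kP M P s t) f = FF P f"
        unfolding hs_op_def FF_def by simp
      show ?thesis using ae unfolding hf
        using WTfL FF_meas[OF P f] gm by (intro l2inner_cong_AE) (auto simp: L2_def)
    qed
    define a where "a n = l2inner M (x' n) (y' n)" for n
    define b where "b n = l2inner M (EP M P (x' n)) (y' n)" for n
    define c where "c n = l2norm M (\<lambda>x. x' n x - EP M P (x' n) x) * l2norm M (y' n)" for n
    define d where "d n = (if n < N then \<eta> * l2norm M (y' n) else 2 * S n)" for n
    have ca: "cmod (a n - b n) \<le> c n" for n
    proof -
      have "a n - b n = l2inner M (\<lambda>x. x' n x - EP M P (x' n) x) (y' n)"
        unfolding a_def b_def by (rule l2inner_diff_left[OF x'L EP_L2[OF P] y'L, symmetric])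
      then show ?thesis unfolding c_def using L2_cs[OF L2_diff[OF x'L EP_L2[OF P]] y'L] by simp
    qed
    have c_le: "c n \<le> 2 * S n" for n
    proof -
      have "l2norm M (\<lambda>x. x' n x - EP M P (x' n) x) \<le> l2norm M (x' n) + l2norm M (EP M P (x' n))"
        by (rule l2norm_diff_le[OF x'L EP_L2[OF P]])
      also have "\<dots> \<le> 2 * l2norm M (x' n)" using EP_contract[OF P x'L[of n]] by simp
      finally have cx: "l2norm M (\<lambda>x. x' n x - EP M P (x' n) x) \<le> 2 * l2norm M (x' n)" .
      have "l2norm M (\<lambda>x. x' n x - EP M P (x' n) x) * l2norm M (y' n) \<le> (2 * l2norm M (x' n)) * l2norm M (y' n)"
        using cx by (rule mult_right_mono) (simp add: l2norm_nonneg)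
      then show ?thesis unfolding c_def S_def by (simp add: mult.assoc)
    qed
    have c_small: "c n \<le> \<eta> * l2norm M (y' n)" if "n < N" for n
    proof -
      have "x' n \<in> Z" unfolding Z_def using that by auto
      then have "l2norm M (\<lambda>x. EP M P (x' n) x - x' n x) \<le> \<eta>" using Pz by blast
      then have "l2norm M (\<lambda>x. x' n x - EP M P (x' n) x) \<le> \<eta>" using l2norm_minus_commute by metis
      then show ?thesis unfolding c_def by (intro mult_right_mono) (auto simp: l2norm_nonneg)
    qed
    have cd: "cmod (a n - b n) \<le> d n" for n
      using ca[of n] c_le[of n] c_small[of n] unfolding d_def by auto
    have S2: "summable (\<lambda>n. 2 * S n)" using Ssum' by (rule summable_mult)
    have dsum: "summable d"
      by (rule summable_comparison_test'[OF S2, of N]) (auto simp: d_def S0)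
    have asum: "summable a"
      by (rule summable_comparison_test'[OF Ssum', of 0]) (use L2_cs[OF x'L y'L] in \<open>auto simp: a_def S_def\<close>)
    have bsum: "summable b"
    proof (rule summable_comparison_test'[OF Ssum', of 0])
      fix n
      have "cmod (b n) \<le> l2norm M (EP M P (x' n)) * l2norm M (y' n)"
        unfolding b_def by (rule L2_cs[OF EP_L2[OF P] y'L])
      also have "\<dots> \<le> S n" unfolding S_def
        using EP_contract[OF P x'L[of n]] by (intro mult_right_mono) (auto simp: l2norm_nonneg)
      finally show "norm (b n) \<le> S n" by simp
    qed
    have abn: "summable (\<lambda>n. norm (a n - b n))"
      by (rule summable_comparison_test'[OF dsum, of 0]) (use cd in auto)
    have "L - l2inner M (W T f) g = (\<Sum>n. a n - b n)"
      unfolding L_eq e1 a_def[symmetric] b_def[symmetric] by (rule suminf_diff[OF asum bsum])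
    also have "cmod \<dots> \<le> (\<Sum>n. norm (a n - b n))" by (rule summable_norm[OF abn])
    also have "\<dots> \<le> suminf d" by (rule suminf_le[OF _ abn dsum]) (use cd in auto)
    also have "suminf d = (\<Sum>i. d (i + N)) + (\<Sum>i<N. d i)" by (rule suminf_split_initial_segment[OF dsum])
    also have "(\<Sum>i. d (i + N)) = (\<Sum>i. 2 * S (i + N))" unfolding d_def by simp
    also have "\<dots> = 2 * (\<Sum>i. S (i + N))"
      by (rule suminf_mult[OF summable_ignore_initial_segment[OF Ssum']])
    also have "(\<Sum>i<N. d i) = \<eta> * Y" unfolding d_def Y_def by (simp add: sum_distrib_left)
    finally have pa: "cmod (L - l2inner M (W T f) g) \<le> 2 * (\<Sum>i. S (i + N)) + \<eta> * Y" .
    have "(\<Sum>i. S (i + N)) < \<delta> / 8" using N by simp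
    then have pa': "cmod (L - l2inner M (W T f) g) \<le> \<delta> / 2" using pa \<eta>Y by linarith
    have pb: "cmod (l2inner M (FF P f) g - l2inner M (GG m P f) g) \<le> B"
      unfolding B_def by (rule FG_l2(2)[OF P f g])
    have "cmod (l2inner M (GG m P f) g - DD m f g) \<le>
      (\<Sum>p\<in>Q m. cmod (cc p) * (l2norm M (\<lambda>x. EP M P (uu m f (snd p)) x - uu m f (snd p) x) * l2norm M (vv m g (fst p))))"
      by (rule term3[OF P f g])
    also have "\<dots> \<le> (\<Sum>p\<in>Q m. cmod (cc p) * (\<eta> * l2norm M (vv m g (fst p))))"
    proof (intro sum_mono mult_left_mono mult_right_mono)
      fix p assume "p \<in> Q m"
      then have "uu m f (snd p) \<in> Z" unfolding Z_def by auto
      then show "l2norm M (\<lambda>x. EP M P (uu m f (snd p)) x - uu m f (snd p) x) \<le> \<eta>" using Pz by blast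
    qed (auto simp: l2norm_nonneg)
    also have "\<dots> = \<eta> * K" unfolding K_def by (simp add: sum_distrib_left mult_ac)
    finally have pc: "cmod (l2inner M (GG m P f) g - DD m f g) \<le> \<delta> / 4" using \<eta>K by linarith
    have eqL: "L - DD m f g = (L - l2inner M (W T f) g) + (l2inner M (FF P f) g - l2inner M (GG m P f) g)
        + (l2inner M (GG m P f) g - DD m f g)" using e2 by simp
    have "cmod (L - DD m f g) \<le> cmod (L - l2inner M (W T f) g) + cmod (l2inner M (FF P f) g - l2inner M (GG m P f) g)
        + cmod (l2inner M (GG m P f) g - DD m f g)"
      unfolding eqL by (rule order_trans[OF norm_triangle_ineq add_right_mono[OF norm_triangle_ineq]])
    then show "cmod (L - DD m f g) \<le> B + \<delta>" using pa' pb pc \<delta> by linarith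
  qed
  then show ?thesis unfolding L_def B_def .
qed

end


context msetup begin

lemma eAg_lim:
  assumes g: "g \<in> L2 M"
  shows "(\<lambda>m. l2norm M (eAg m g)) \<longlonglongrightarrow> 0"
proof -
  have gi: "integrable M (\<lambda>s. (cmod (g s))\<^sup>2)" using g by (simp add: L2_def)
  have lim: "(\<lambda>m. LINT s|M. (cmod (eAg m g s))\<^sup>2) \<longlonglongrightarrow> (LINT s|M. (0::real))"
  proof (rule integral_dominated_convergence[where w="\<lambda>s. (2 * R)\<^sup>2 * (cmod (g s))\<^sup>2"])
    show "(\<lambda>s. 0::real) \<in> borel_measurable M" by simp
    show "\<And>m. (\<lambda>s. (cmod (eAg m g s))\<^sup>2) \<in> borel_measurable M"
      using eAg_L2[OF g] unfolding eAg_def L2_def by auto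
    show "integrable M (\<lambda>s. (2 * R)\<^sup>2 * (cmod (g s))\<^sup>2)" using gi by simp
    show "AE s in M. (\<lambda>m. (cmod (eAg m g s))\<^sup>2) \<longlonglongrightarrow> 0"
      using eA_lim
    proof eventually_elim
      fix s assume l: "(\<lambda>m. eA m s) \<longlonglongrightarrow> 0"
      have "(\<lambda>m. (eA m s * cmod (g s))\<^sup>2) \<longlonglongrightarrow> (0 * cmod (g s))\<^sup>2"
        by (intro tendsto_intros l)
      then show "(\<lambda>m. (cmod (eAg m g s))\<^sup>2) \<longlonglongrightarrow> 0"
        by (simp add: eAg_def norm_mult eA_nonneg)
    qed
    show "\<And>m. AE s in M. norm ((cmod (eAg m g s))\<^sup>2) \<le> (2 * R)\<^sup>2 * (cmod (g s))\<^sup>2"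
    proof (rule AE_I2)
      fix m s
      have "eA m s * cmod (g s) \<le> 2 * R * cmod (g s)" using eA_le by (intro mult_right_mono) auto
      then have "(eA m s * cmod (g s))\<^sup>2 \<le> (2 * R * cmod (g s))\<^sup>2"
        by (intro power_mono) (auto simp: eA_nonneg)
      then show "norm ((cmod (eAg m g s))\<^sup>2) \<le> (2 * R)\<^sup>2 * (cmod (g s))\<^sup>2"
        by (simp add: eAg_def norm_mult eA_nonneg power_mult_distrib)
    qed
  qed
  then have "(\<lambda>m. sqrt (LINT s|M. (cmod (eAg m g s))\<^sup>2)) \<longlonglongrightarrow> sqrt 0"
    by (intro tendsto_real_sqrt) simp
  then show ?thesis by (simp add: l2norm_def)
qed

lemma eBf_lim:
  assumes g: "g \<in> L2 M"
  shows "(\<lambda>m. l2norm M (eBf m g)) \<longlonglongrightarrow> 0"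
proof -
  have gi: "integrable M (\<lambda>s. (cmod (g s))\<^sup>2)" using g by (simp add: L2_def)
  have lim: "(\<lambda>m. LINT s|M. (cmod (eBf m g s))\<^sup>2) \<longlonglongrightarrow> (LINT s|M. (0::real))"
  proof (rule integral_dominated_convergence[where w="\<lambda>s. (2 * R)\<^sup>2 * (cmod (g s))\<^sup>2"])
    show "(\<lambda>s. 0::real) \<in> borel_measurable M" by simp
    show "\<And>m. (\<lambda>s. (cmod (eBf m g s))\<^sup>2) \<in> borel_measurable M"
      using eBf_L2[OF g] unfolding eBf_def L2_def by auto
    show "integrable M (\<lambda>s. (2 * R)\<^sup>2 * (cmod (g s))\<^sup>2)" using gi by simp
    show "AE s in M. (\<lambda>m. (cmod (eBf m g s))\<^sup>2) \<longlonglongrightarrow> 0"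
      using eB_lim
    proof eventually_elim
      fix s assume l: "(\<lambda>m. eB m s) \<longlonglongrightarrow> 0"
      have "(\<lambda>m. (eB m s * cmod (g s))\<^sup>2) \<longlonglongrightarrow> (0 * cmod (g s))\<^sup>2"
        by (intro tendsto_intros l)
      then show "(\<lambda>m. (cmod (eBf m g s))\<^sup>2) \<longlonglongrightarrow> 0"
        by (simp add: eBf_def norm_mult eB_nonneg)
    qed
    show "\<And>m. AE s in M. norm ((cmod (eBf m g s))\<^sup>2) \<le> (2 * R)\<^sup>2 * (cmod (g s))\<^sup>2"
    proof (rule AE_I2)
      fix m s
      have "eB m s * cmod (g s) \<le> 2 * R * cmod (g s)" using eB_le by (intro mult_right_mono) auto
      then have "(eB m s * cmod (g s))\<^sup>2 \<le> (2 * R * cmod (g s))\<^sup>2"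
        by (intro power_mono) (auto simp: eB_nonneg)
      then show "norm ((cmod (eBf m g s))\<^sup>2) \<le> (2 * R)\<^sup>2 * (cmod (g s))\<^sup>2"
        by (simp add: eBf_def norm_mult eB_nonneg power_mult_distrib)
    qed
  qed
  then have "(\<lambda>m. sqrt (LINT s|M. (cmod (eBf m g s))\<^sup>2)) \<longlonglongrightarrow> sqrt 0"
    by (intro tendsto_real_sqrt) simp
  then show ?thesis by (simp add: l2norm_def)
qed

lemma D_lim:
  assumes f: "f \<in> L2 M" and g: "g \<in> L2 M"
  shows "(\<lambda>m. DD m f g) \<longlonglongrightarrow> l2inner M (W (\<lambda>h. h) f) g"
proof -
  define L where "L = l2inner M (W (\<lambda>h. h) f) g"
  define B where "B m = R * (l2norm M f * l2norm M (eAg m g)) + R * (l2norm M (eBf m f) * l2norm M g)" for m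
  have "B \<longlonglongrightarrow> R * (l2norm M f * 0) + R * (0 * l2norm M g)"
    unfolding B_def by (intro tendsto_intros eAg_lim[OF g] eBf_lim[OF f])
  then have B0: "B \<longlonglongrightarrow> 0" by simp
  have "(\<lambda>m. L - DD m f g) \<longlonglongrightarrow> 0"
  proof (rule Lim_null_comparison[OF _ B0])
    show "\<forall>\<^sub>F m in sequentially. norm (L - DD m f g) \<le> B m"
      unfolding L_def B_def using main_bound[OF f g] by simp
  qed
  then have "(\<lambda>m. L - (L - DD m f g)) \<longlonglongrightarrow> L - 0" by (intro tendsto_intros)
  then show ?thesis unfolding L_def by simp
qed

lemma diag: "AE t in M. (\<lambda>m. dm m t) \<longlonglongrightarrow> cinner (\<alpha> t) (\<beta> t)"
  using aL bL
proof eventually_elim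
  fix t assume la: "(\<lambda>n. aM n t) \<longlonglongrightarrow> \<alpha> t" and lb: "(\<lambda>n. bM n t) \<longlonglongrightarrow> \<beta> t"
  have na: "(\<lambda>m. norm (aM m t - \<alpha> t)) \<longlonglongrightarrow> 0"
    using tendsto_norm[OF tendsto_diff[OF la tendsto_const[of "\<alpha> t"]]] by simp
  have nb: "(\<lambda>m. norm (bM m t - \<beta> t)) \<longlonglongrightarrow> 0"
    using tendsto_norm[OF tendsto_diff[OF lb tendsto_const[of "\<beta> t"]]] by simp
  have g0: "(\<lambda>m. R * norm (aM m t - \<alpha> t) + norm (\<alpha> t) * norm (bM m t - \<beta> t)) \<longlonglongrightarrow> R * 0 + norm (\<alpha> t) * 0"
    by (intro tendsto_intros na nb)
  have "(\<lambda>m. dm m t - cinner (\<alpha> t) (\<beta> t)) \<longlonglongrightarrow> 0"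
  proof (rule Lim_null_comparison)
    show "(\<lambda>m. R * norm (aM m t - \<alpha> t) + norm (\<alpha> t) * norm (bM m t - \<beta> t)) \<longlonglongrightarrow> 0" using g0 by simp
    show "\<forall>\<^sub>F m in sequentially. norm (dm m t - cinner (\<alpha> t) (\<beta> t)) \<le> R * norm (aM m t - \<alpha> t) + norm (\<alpha> t) * norm (bM m t - \<beta> t)"
    proof (rule always_eventually, rule allI)
      fix m
      have "dm m t - cinner (\<alpha> t) (\<beta> t) = cinner (aM m t - \<alpha> t) (bM m t) + cinner (\<alpha> t) (bM m t - \<beta> t)"
        unfolding dm_def by (simp add: cinner_diff_left cinner_diff_right)
      then have "norm (dm m t - cinner (\<alpha> t) (\<beta> t)) \<le> cmod (cinner (aM m t - \<alpha> t) (bM m t)) + cmod (cinner (\<alpha> t) (bM m t - \<beta> t))"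
        by (simp add: norm_triangle_ineq)
      also have "\<dots> \<le> norm (aM m t - \<alpha> t) * norm (bM m t) + norm (\<alpha> t) * norm (bM m t - \<beta> t)"
        by (intro add_mono cinner_cs)
      also have "\<dots> \<le> R * norm (aM m t - \<alpha> t) + norm (\<alpha> t) * norm (bM m t - \<beta> t)"
        using mult_right_mono[OF bB[of m t] norm_ge_zero[of "aM m t - \<alpha> t"]] by (simp add: mult.commute)
      finally show "norm (dm m t - cinner (\<alpha> t) (\<beta> t)) \<le> R * norm (aM m t - \<alpha> t) + norm (\<alpha> t) * norm (bM m t - \<beta> t)" .
    qed
  qed
  then have "(\<lambda>m. (dm m t - cinner (\<alpha> t) (\<beta> t)) + cinner (\<alpha> t) (\<beta> t)) \<longlonglongrightarrow> 0 + cinner (\<alpha> t) (\<beta> t)"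
    by (intro tendsto_intros)
  then show "(\<lambda>m. dm m t) \<longlonglongrightarrow> cinner (\<alpha> t) (\<beta> t)" by simp
qed

lemma DD_lim_general:
  assumes f: "f \<in> L2 M" and g: "g \<in> L2 M" and c: "c \<in> borel_measurable M"
    and ae: "AE t in M. (\<lambda>m. dm m t) \<longlonglongrightarrow> c t"
  shows "(\<lambda>m. DD m f g) \<longlonglongrightarrow> (LINT t|M. c t * f t * cnj (g t))"
  unfolding DD_def
proof (rule integral_dominated_convergence[where w="\<lambda>t. (R * R) * cmod (f t * cnj (g t))"])
  have fm: "f \<in> borel_measurable M" and gm: "g \<in> borel_measurable M" using f g by (auto simp: L2_def)
  show "(\<lambda>t. c t * f t * cnj (g t)) \<in> borel_measurable M" using c fm gm by measurable
  show "\<And>m. (\<lambda>t. dm m t * f t * cnj (g t)) \<in> borel_measurable M" using fm gm by measurable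
  show "integrable M (\<lambda>t. (R * R) * cmod (f t * cnj (g t)))" using L2_prod_int_cnj[OF f g] by simp
  show "AE t in M. (\<lambda>m. dm m t * f t * cnj (g t)) \<longlonglongrightarrow> c t * f t * cnj (g t)"
    using ae by eventually_elim (intro tendsto_intros)
  show "\<And>m. AE t in M. norm (dm m t * f t * cnj (g t)) \<le> (R * R) * cmod (f t * cnj (g t))"
  proof (rule AE_I2)
    fix m t
    show "norm (dm m t * f t * cnj (g t)) \<le> (R * R) * cmod (f t * cnj (g t))"
      using mult_right_mono[OF dm_bound[of m t], of "cmod (f t) * cmod (g t)"] by (simp add: norm_mult mult.assoc)
  qed
qed

lemma dir1:
  assumes one: "AE t in M. cinner (\<alpha> t) (\<beta> t) = 1"
  shows "op_eq M (W (\<lambda>h. h)) (\<lambda>h. h)"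
proof -
  have key: "l2inner M (W (\<lambda>h. h) f) g = l2inner M f g" if f: "f \<in> L2 M" and g: "g \<in> L2 M" for f g
  proof -
    have ae: "AE t in M. (\<lambda>m. dm m t) \<longlonglongrightarrow> 1" using diag one by eventually_elim simp
    have "(\<lambda>m. DD m f g) \<longlonglongrightarrow> (LINT t|M. 1 * f t * cnj (g t))"
      by (rule DD_lim_general[OF f g _ ae]) simp
    then have "(\<lambda>m. DD m f g) \<longlonglongrightarrow> l2inner M f g" by (simp add: l2inner_def)
    with D_lim[OF f g] show ?thesis by (rule LIMSEQ_unique)
  qed
  show ?thesis unfolding op_eq_def
  proof
    fix h assume h: "h \<in> L2 M"
    have Wh: "W (\<lambda>h. h) h \<in> L2 M" using W1[OF bounded_id] h unfolding bounded_op_def by blast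
    define d where "d x = W (\<lambda>h. h) h x - h x" for x
    have dL: "d \<in> L2 M" unfolding d_def by (rule L2_diff[OF Wh h])
    have "l2inner M d d = l2inner M (W (\<lambda>h. h) h) d - l2inner M h d"
      unfolding d_def[abs_def] by (rule l2inner_diff_left[OF Wh h dL[unfolded d_def[abs_def]]])
    also have "\<dots> = 0" using key[OF h dL] by simp
    finally have "complex_of_real ((l2norm M d)\<^sup>2) = 0" using l2inner_self[OF dL] by simp
    then have "l2norm M d = 0" by simp
    then have "AE x in M. d x = 0" by (rule l2norm_eq_0[OF dL])
    then show "AE x in M. W (\<lambda>h. h) h x = h x" by eventually_elim (simp add: d_def)
  qed
qed

lemma dir2:
  assumes eq: "op_eq M (W (\<lambda>h. h)) (\<lambda>h. h)"
  shows "AE t in M. cinner (\<alpha> t) (\<beta> t) = 1"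
proof -
  have key2: "l2inner M (W (\<lambda>h. h) f) g = l2inner M f g" if f: "f \<in> L2 M" and g: "g \<in> L2 M" for f g
  proof -
    have Wf: "W (\<lambda>h. h) f \<in> L2 M" using W1[OF bounded_id] f unfolding bounded_op_def by blast
    have ae: "AE x in M. W (\<lambda>h. h) f x = f x" using eq f unfolding op_eq_def by blast
    show ?thesis using Wf f g ae by (intro l2inner_cong_AE) (auto simp: L2_def)
  qed
  define lm where "lm t = lim (\<lambda>m. dm m t)" for t
  have lm_meas[measurable]: "lm \<in> borel_measurable M" unfolding lm_def by measurable
  define dc where "dc t = (if cmod (lm t) \<le> R * R then lm t else 0)" for t
  have dc_meas[measurable]: "dc \<in> borel_measurable M" unfolding dc_def by measurable
  have dc_bound: "cmod (dc t) \<le> R * R" for t unfolding dc_def using Rp by auto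
  have dc_ae: "AE t in M. dc t = cinner (\<alpha> t) (\<beta> t) \<and> (\<lambda>m. dm m t) \<longlonglongrightarrow> dc t"
    using diag \<alpha>B \<beta>B
  proof eventually_elim
    fix t assume l: "(\<lambda>m. dm m t) \<longlonglongrightarrow> cinner (\<alpha> t) (\<beta> t)" and a: "norm (\<alpha> t) \<le> R" and b: "norm (\<beta> t) \<le> R"
    have lmt: "lm t = cinner (\<alpha> t) (\<beta> t)" unfolding lm_def using l by (rule limI)
    have "cmod (cinner (\<alpha> t) (\<beta> t)) \<le> R * R"
    proof -
      have "norm (\<alpha> t) * norm (\<beta> t) \<le> R * R" using mult_mono[OF a b] Rp by simp
      then show ?thesis using cinner_cs[of "\<alpha> t" "\<beta> t"] by linarith
    qed
    then have "dc t = cinner (\<alpha> t) (\<beta> t)" unfolding dc_def lmt by simp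
    then show "dc t = cinner (\<alpha> t) (\<beta> t) \<and> (\<lambda>m. dm m t) \<longlonglongrightarrow> dc t" using l by simp
  qed
  have intg: "(LINT t|M. dc t * f t * cnj (g t)) = l2inner M f g" if f: "f \<in> L2 M" and g: "g \<in> L2 M" for f g
  proof -
    have "AE t in M. (\<lambda>m. dm m t) \<longlonglongrightarrow> dc t" using dc_ae by eventually_elim blast
    then have "(\<lambda>m. DD m f g) \<longlonglongrightarrow> (LINT t|M. dc t * f t * cnj (g t))"
      by (rule DD_lim_general[OF f g dc_meas])
    moreover have "(\<lambda>m. DD m f g) \<longlonglongrightarrow> l2inner M f g" using D_lim[OF f g] key2[OF f g] by simp
    ultimately show ?thesis by (rule LIMSEQ_unique)
  qed
  obtain A :: "nat \<Rightarrow> 'a set" where A: "range A \<subseteq> sets M" "(\<Union>i. A i) = space M" "\<And>i. emeasure M (A i) \<noteq> \<infinity>"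
    using sigma_finite_measure.sigma_finite[OF sf] by blast
  have Ai: "AE t in M. t \<in> A i \<longrightarrow> dc t = 1" for i
  proof -
    have As[measurable]: "A i \<in> sets M" using A(1) by auto
    have Af: "emeasure M (A i) < \<infinity>" using A(3)[of i] by (simp add: less_top)
    define f where "f t = (indicator (A i) t :: complex)" for t
    define g where "g t = (dc t - 1) * indicator (A i) t" for t
    have fL: "f \<in> L2 M" unfolding f_def[abs_def] by (rule L2_indicator[OF As Af])
    have gL: "g \<in> L2 M" unfolding g_def[abs_def]
    proof (rule L2_bmult[where B="R * R + 1", OF L2_indicator[OF As Af]])
      show "(\<lambda>x. dc x - 1) \<in> borel_measurable M" by measurable
      fix x show "cmod (dc x - 1) \<le> R * R + 1"
        using norm_triangle_ineq4[of "dc x" 1] dc_bound[of x] by simp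
    qed
    have dfL: "(\<lambda>t. dc t * f t) \<in> L2 M"
      by (rule L2_bmult[where B="R * R", OF fL dc_meas]) (rule dc_bound)
    define h where "h t = indicator (A i) t * (cmod (dc t - 1))\<^sup>2" for t
    have pw: "(\<lambda>t. dc t * f t * cnj (g t) - f t * cnj (g t)) = (\<lambda>t. complex_of_real (h t))"
    proof
      fix t
      show "dc t * f t * cnj (g t) - f t * cnj (g t) = complex_of_real (h t)"
      proof (cases "t \<in> A i")
        case True
        have "(dc t - 1) * cnj (dc t - 1) = complex_of_real ((cmod (dc t - 1))\<^sup>2)"
          by (rule complex_norm_square[symmetric])
        then show ?thesis using True unfolding f_def g_def h_def by (simp add: algebra_simps)
      next
        case False
        then show ?thesis unfolding f_def g_def h_def by simp
      qed
    qed
    have i1: "integrable M (\<lambda>t. dc t * f t * cnj (g t))" by (rule L2_prod_int_cnj[OF dfL gL])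
    have i2: "integrable M (\<lambda>t. f t * cnj (g t))" by (rule L2_prod_int_cnj[OF fL gL])
    have ich: "integrable M (\<lambda>t. complex_of_real (h t))"
      using Bochner_Integration.integrable_diff[OF i1 i2] unfolding pw .
    have ih: "integrable M h"
      using integrable_Re[OF ich] by simp
    have "complex_of_real (LINT t|M. h t) = (LINT t|M. complex_of_real (h t))"
      by (rule integral_complex_of_real[symmetric])
    also have "\<dots> = (LINT t|M. dc t * f t * cnj (g t) - f t * cnj (g t))" unfolding pw ..
    also have "\<dots> = (LINT t|M. dc t * f t * cnj (g t)) - (LINT t|M. f t * cnj (g t))"
      using i1 i2 by simp
    also have "\<dots> = 0" unfolding intg[OF fL gL] l2inner_def by simp
    finally have "(LINT t|M. h t) = 0" by simp
    then have h0: "integral\<^sup>L M h = 0" by simp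
    have hnn: "AE t in M. 0 \<le> h t" by (simp add: h_def)
    have "AE t in M. h t = 0" using integral_nonneg_eq_0_iff_AE[OF ih hnn] h0 by simp
    then show ?thesis by eventually_elim (auto simp: h_def)
  qed
  have "AE t in M. \<forall>i. t \<in> A i \<longrightarrow> dc t = 1"
    by (rule AE_all_countable[THEN iffD2]) (rule allI, rule Ai)
  then show ?thesis using dc_ae AE_space
  proof eventually_elim
    fix t assume a: "\<forall>i. t \<in> A i \<longrightarrow> dc t = 1" and d: "dc t = cinner (\<alpha> t) (\<beta> t) \<and> (\<lambda>m. dm m t) \<longlonglongrightarrow> dc t"
      and t: "t \<in> space M"
    obtain i where "t \<in> A i" using t A(2) by auto
    then show "cinner (\<alpha> t) (\<beta> t) = 1" using a d by auto
  qed
qed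

end

theorem mainTheorem7:
  fixes M :: "'a measure" and \<phi> :: "'a \<Rightarrow> 'a \<Rightarrow> complex"
    and \<alpha> \<beta> :: "'a \<Rightarrow> 'h::chilbert" and W :: "'a op \<Rightarrow> 'a op"
  assumes "sigma_finite_measure M"
    and "Linf2 M \<phi>"
    and "schur_multiplier M \<phi>"
    and "Linf_vec M \<alpha>" and "Linf_vec M \<beta>"
    and "AE z in M \<Otimes>\<^sub>M M. \<phi> (fst z) (snd z) = cinner (\<alpha> (fst z)) (\<beta> (snd z))"
    and "schur_ext M \<phi> W"
  shows "op_eq M (W (\<lambda>h. h)) (\<lambda>h. h) \<longleftrightarrow> (AE t in M. cinner (\<alpha> t) (\<beta> t) = 1)"
proof -
  obtain aM Ra where a: "Ra > 0" "\<forall>n. simple_function M (aM n)" "\<forall>n x. norm (aM n x) \<le> Ra"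
    "AE x in M. (\<lambda>n. aM n x) \<longlonglongrightarrow> \<alpha> x" "AE x in M. norm (\<alpha> x) \<le> Ra"
    using trunc_approx[OF assms(4)] by blast
  obtain bM Rb where b: "Rb > 0" "\<forall>n. simple_function M (bM n)" "\<forall>n x. norm (bM n x) \<le> Rb"
    "AE x in M. (\<lambda>n. bM n x) \<longlonglongrightarrow> \<beta> x" "AE x in M. norm (\<beta> x) \<le> Rb"
    using trunc_approx[OF assms(5)] by blast
  obtain Cp where Cp: "AE z in M \<Otimes>\<^sub>M M. cmod (\<phi> (fst z) (snd z)) \<le> Cp"
    using assms(2) unfolding Linf2_def by blast
  have phim: "(\<lambda>z. \<phi> (fst z) (snd z)) \<in> borel_measurable (M \<Otimes>\<^sub>M M)"
    using assms(2) unfolding Linf2_def by blast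
  define R where "R = max Ra Rb"
  have aR: "AE x in M. norm (\<alpha> x) \<le> R" using a(5) by eventually_elim (simp add: R_def)
  have bR: "AE x in M. norm (\<beta> x) \<le> R" using b(5) by eventually_elim (simp add: R_def)
  have aB: "\<And>n x. norm (aM n x) \<le> R" using a(3) unfolding R_def by (meson max.cobounded1 order_trans)
  have bB: "\<And>n x. norm (bM n x) \<le> R" using b(3) unfolding R_def by (meson max.cobounded2 order_trans)
  have Rp: "R > 0" using a(1) unfolding R_def by simp
  have ms: "msetup M \<phi> \<alpha> \<beta> W aM bM R Cp"
    unfolding msetup_def
    using assms(1,6,7) phim Cp Rp a(2,4) b(2,4) aB bB aR bR by blast
  show ?thesis using msetup.dir1[OF ms] msetup.dir2[OF ms] by blast
qed


end
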